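(* Let $V_1=\langle\lambda_{12},\lambda_{21}\rangle$ and let $V_2^*$ be the normal closure in $VP_3$ of $V_2=\langle\lambda_{13},\lambda_{23},\lambda_{31},\lambda_{32}\rangle$. Then $V_2^*$ is a free group, freely generated by $\lambda_{13}$, $\lambda_{23}$, all elements $\lambda_{31}^v$ where $v$ ranges over the empty word and the reduced words in $\lambda_{12}^{\pm1},\lambda_{21}^{\pm1}$ beginning with a nonzero power of $\lambda_{21}$, and all elements $\lambda_{32}^u$ where $u$ ranges over the empty word and the reduced words in $\lambda_{12}^{\pm1},\lambda_{21}^{\pm1}$ beginning with a nonzero power of $\lambda_{12}$.
   Context: Notation: $a^b=b^{-1}ab$. The virtual braid group $VB_3$ has generators $\sigma_1,\sigma_2,\rho_1,\rho_2$ and defining relations $\sigma_1\sigma_2\sigma_1=\sigma_2\sigma_1\sigma_2$, $\rho_1\rho_2\rho_1=\rho_2\rho_1\rho_2$, $\rho_1^2=\rho_2^2=1$, $\rho_1\rho_2\sigma_1=\sigma_2\rho_1\rho_2$. $VP_3$ is the kernel of the homomorphism $VB_3\to S_3$ sending $\sigma_i,\rho_i$ to $(i,i+1)$. Define $\lambda_{12}=\rho_1\sigma_1^{-1}$, $\lambda_{21}=\sigma_1^{-1}\rho_1$, $\lambda_{23}=\rho_2\sigma_2^{-1}$, $\lambda_{32}=\sigma_2^{-1}\rho_2$, $\lambda_{13}=\rho_2\lambda_{12}\rho_2$, $\lambda_{31}=\rho_2\lambda_{21}\rho_2$. The group $V_1$ is free on $\lambda_{12},\lambda_{21}$. *)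

theory Defs
  imports "HOL-Algebra.Algebra"
begin

text \<open>A word over an alphabet 'g is a list of letters (g, e); e = True means the
inverse letter g^-1.\<close>

type_synonym 'g word = "('g \<times> bool) list"

fun reduced :: "'g word \<Rightarrow> bool" where
  "reduced [] = True"
| "reduced [x] = True"
| "reduced (x # y # w) = (\<not> (fst x = fst y \<and> snd x \<noteq> snd y) \<and> reduced (y # w))"

definition letter_eval :: "('a, 'b) monoid_scheme \<Rightarrow> ('g \<Rightarrow> 'a) \<Rightarrow> 'g \<times> bool \<Rightarrow> 'a" where
  "letter_eval G f x = (if snd x then inv\<^bsub>G\<^esub> (f (fst x)) else f (fst x))"

definition word_eval :: "('a, 'b) monoid_scheme \<Rightarrow> ('g \<Rightarrow> 'a) \<Rightarrow> 'g word \<Rightarrow> 'a" where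
  "word_eval G f w = foldr (\<lambda>x acc. letter_eval G f x \<otimes>\<^bsub>G\<^esub> acc) w \<one>\<^bsub>G\<^esub>"

definition free_family :: "('a, 'b) monoid_scheme \<Rightarrow> ('g \<Rightarrow> 'a) \<Rightarrow> 'g set \<Rightarrow> bool" where
  "free_family G f I \<longleftrightarrow> inj_on f I \<and> f ` I \<subseteq> carrier G \<and>
     (\<forall>w. w \<noteq> [] \<and> reduced w \<and> set (map fst w) \<subseteq> I \<longrightarrow> word_eval G f w \<noteq> \<one>\<^bsub>G\<^esub>)"

definition conjg :: "('a, 'b) monoid_scheme \<Rightarrow> 'a \<Rightarrow> 'a \<Rightarrow> 'a" where
  "conjg G a b = inv\<^bsub>G\<^esub> b \<otimes>\<^bsub>G\<^esub> a \<otimes>\<^bsub>G\<^esub> b"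

definition normal_closure :: "('a, 'b) monoid_scheme \<Rightarrow> 'a set \<Rightarrow> 'a set" where
  "normal_closure G S = \<Inter> {N. N \<lhd> G \<and> S \<subseteq> N}"

datatype vbgen = S1 | S2 | R1 | R2

abbreviation (input) pos :: "'g \<Rightarrow> 'g \<times> bool" where "pos g \<equiv> (g, False)"
abbreviation (input) ng :: "'g \<Rightarrow> 'g \<times> bool" where "ng g \<equiv> (g, True)"

fun inv_word :: "'g word \<Rightarrow> 'g word" where
  "inv_word [] = []"
| "inv_word (x # w) = inv_word w @ [(fst x, \<not> snd x)]"

text \<open>Defining relators (each relation u = v is encoded as the relator u v^-1).\<close>
definition vb3_relators :: "vbgen word set" where
  "vb3_relators = {
     [pos S1, pos S2, pos S1] @ inv_word [pos S2, pos S1, pos S2],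
     [pos R1, pos R2, pos R1] @ inv_word [pos R2, pos R1, pos R2],
     [pos R1, pos R1],
     [pos R2, pos R2],
     [pos R1, pos R2, pos S1] @ inv_word [pos S2, pos R1, pos R2]}"

inductive vb3_eq :: "vbgen word \<Rightarrow> vbgen word \<Rightarrow> bool" where
  refl: "vb3_eq w w"
| sym: "vb3_eq u w \<Longrightarrow> vb3_eq w u"
| trans: "vb3_eq u v \<Longrightarrow> vb3_eq v w \<Longrightarrow> vb3_eq u w"
| cancel: "vb3_eq (u @ [(g, e), (g, \<not> e)] @ w) (u @ w)"
| relator: "r \<in> vb3_relators \<Longrightarrow> vb3_eq (u @ r @ w) (u @ w)"

definition vb3_rel :: "(vbgen word \<times> vbgen word) set" where
  "vb3_rel = {(u, w). vb3_eq u w}"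

definition vb3_class :: "vbgen word \<Rightarrow> vbgen word set" where
  "vb3_class w = vb3_rel `` {w}"

definition VB3 :: "vbgen word set monoid" where
  "VB3 = \<lparr> carrier = UNIV // vb3_rel,
           monoid.mult = (\<lambda>A B. vb3_class ((SOME a. a \<in> A) @ (SOME b. b \<in> B))),
           monoid.one = vb3_class [] \<rparr>"

definition sigma1 where "sigma1 = vb3_class [pos S1]"
definition sigma2 where "sigma2 = vb3_class [pos S2]"
definition rho1 where "rho1 = vb3_class [pos R1]"
definition rho2 where "rho2 = vb3_class [pos R2]"

definition transp :: "nat \<Rightarrow> nat \<Rightarrow> nat" where
  "transp i = (\<lambda>x. if x = i then i + 1 else if x = i + 1 then i else x)"

fun gen_perm :: "vbgen \<Rightarrow> nat \<Rightarrow> nat" where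
  "gen_perm S1 = transp 1"
| "gen_perm S2 = transp 2"
| "gen_perm R1 = transp 1"
| "gen_perm R2 = transp 2"

definition word_perm :: "vbgen word \<Rightarrow> nat \<Rightarrow> nat" where
  "word_perm w = foldr (\<lambda>x p. gen_perm (fst x) \<circ> p) w id"

text \<open>VP_3 = kernel of VB_3 \<rightarrow> S_3 (transpositions are involutions, so inverse
letters map to the same transposition).\<close>
definition VP3 :: "vbgen word set set" where
  "VP3 = {vb3_class w | w. word_perm w = id}"

definition VP3_grp :: "vbgen word set monoid" where
  "VP3_grp = VB3\<lparr>carrier := VP3\<rparr>"

definition lam12 where "lam12 = rho1 \<otimes>\<^bsub>VB3\<^esub> inv\<^bsub>VB3\<^esub> sigma1"
definition lam21 where "lam21 = inv\<^bsub>VB3\<^esub> sigma1 \<otimes>\<^bsub>VB3\<^esub> rho1"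
definition lam23 where "lam23 = rho2 \<otimes>\<^bsub>VB3\<^esub> inv\<^bsub>VB3\<^esub> sigma2"
definition lam32 where "lam32 = inv\<^bsub>VB3\<^esub> sigma2 \<otimes>\<^bsub>VB3\<^esub> rho2"
definition lam13 where "lam13 = rho2 \<otimes>\<^bsub>VB3\<^esub> lam12 \<otimes>\<^bsub>VB3\<^esub> rho2"
definition lam31 where "lam31 = rho2 \<otimes>\<^bsub>VB3\<^esub> lam21 \<otimes>\<^bsub>VB3\<^esub> rho2"

definition V2 where "V2 = generate VP3_grp {lam13, lam23, lam31, lam32}"
definition V2star where "V2star = normal_closure VP3_grp V2"

datatype v1gen = G12 | G21

fun v1_val :: "v1gen \<Rightarrow> vbgen word set" where
  "v1_val G12 = lam12"
| "v1_val G21 = lam21"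

datatype basis_idx = L13 | L23 | L31 "v1gen word" | L32 "v1gen word"

fun basis_elt :: "basis_idx \<Rightarrow> vbgen word set" where
  "basis_elt L13 = lam13"
| "basis_elt L23 = lam23"
| "basis_elt (L31 v) = conjg VB3 lam31 (word_eval VB3 v1_val v)"
| "basis_elt (L32 u) = conjg VB3 lam32 (word_eval VB3 v1_val u)"

definition basis_set :: "basis_idx set" where
  "basis_set = {L13, L23}
     \<union> {L31 v | v. reduced v \<and> (v = [] \<or> fst (hd v) = G21)}
     \<union> {L32 u | u. reduced u \<and> (u = [] \<or> fst (hd u) = G12)}"

end

theory Submission
  imports Defs
begin


section \<open>Free group normal forms\<close>

definition invl :: "'g \<times> bool \<Rightarrow> 'g \<times> bool" where
  "invl x = (fst x, \<not> snd x)"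

fun consr :: "'g \<times> bool \<Rightarrow> 'g word \<Rightarrow> 'g word" where
  "consr x [] = [x]"
| "consr x (y # r) = (if fst y = fst x \<and> snd y \<noteq> snd x then r else x # y # r)"

definition app :: "'g word \<Rightarrow> 'g word \<Rightarrow> 'g word" where
  "app P r = foldr consr P r"

definition nf :: "'g word \<Rightarrow> 'g word" where
  "nf P = app P []"

lemma app_Nil[simp]: "app [] r = r" by (simp add: app_def)
lemma app_Cons[simp]: "app (x # P) r = consr x (app P r)" by (simp add: app_def)
lemma app_append[simp]: "app (P @ Q) r = app P (app Q r)" by (simp add: app_def)

lemma reduced_Cons: "reduced (x # r) \<longleftrightarrow> reduced r \<and> (r = [] \<or> \<not> (fst x = fst (hd r) \<and> snd x \<noteq> snd (hd r)))"
  by (cases r) auto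

lemma reduced_tl: "reduced (x # r) \<Longrightarrow> reduced r"
  by (simp add: reduced_Cons)

lemma consr_reduced[simp]: "reduced r \<Longrightarrow> reduced (consr x r)"
  by (cases r) (auto simp: reduced_Cons)

lemma app_reduced[simp]: "reduced r \<Longrightarrow> reduced (app P r)"
  by (induction P) auto

lemma nf_reduced[simp]: "reduced (nf P)"
  by (simp add: nf_def)

lemma consr_cancel[simp]:
  assumes red: "reduced r" and e: "e' = (\<not> e)" shows "consr (g, e') (consr (g, e) r) = r"
proof (cases r)
  case Nil then show ?thesis using e by auto
next
  case (Cons y r')
  show ?thesis
  proof (cases "fst y = g \<and> snd y \<noteq> e")
    case True
    then have "consr (g,e) r = r'" using Cons by auto
    moreover have ye: "y = (g, e')" using True e by (cases y) auto
    moreover have "consr (g, e') r' = (g,e') # r'"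
    proof (cases r')
      case Nil then show ?thesis by simp
    next
      case (Cons z r'')
      have "reduced (y # z # r'')" using red \<open>r = y # r'\<close> Cons by simp
      then have "\<not> (fst z = g \<and> snd z \<noteq> e')" using ye by auto
      then show ?thesis using Cons by simp
    qed
    ultimately show ?thesis using Cons by simp
  next
    case False
    then show ?thesis using Cons e by (cases y) auto
  qed
qed

lemma consr_cancel'[simp]: "reduced r \<Longrightarrow> consr (invl x) (consr x r) = r"
  by (cases x) (simp add: invl_def)

lemma consr_reduced_eq: "reduced (x # r) \<Longrightarrow> consr x r = x # r"
  by (cases r) (auto)

lemma nf_reduced_id: "reduced r \<Longrightarrow> nf r = r"
proof (induction r)
  case Nil then show ?case by (simp add: nf_def)
next
  case (Cons x r)
  then have "nf r = r" using reduced_tl by blast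
  then show ?case using Cons.prems by (simp add: nf_def consr_reduced_eq)
qed

lemma invl_invl[simp]: "invl (invl x) = x"
  by (simp add: invl_def)

lemma consr_app: "reduced s \<Longrightarrow> reduced r \<Longrightarrow> consr x (app s r) = app (consr x s) r"
proof (cases s)
  case Nil then show ?thesis by simp
next
  case (Cons y s')
  assume rs: "reduced s" and rr: "reduced r"
  show ?thesis
  proof (cases "fst y = fst x \<and> snd y \<noteq> snd x")
    case True
    then have yx: "y = invl x" by (cases x; cases y) (auto simp: invl_def)
    have rr': "reduced (app s' r)" using rr by simp
    have "consr x (app s r) = consr (invl (invl x)) (consr (invl x) (app s' r))"
      using Cons yx by simp
    also have "\<dots> = app s' r" using consr_cancel'[OF rr', of "invl x"] .
    finally show ?thesis using Cons True by simp
  next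
    case False
    then have "consr x s = x # s" using Cons by simp
    then show ?thesis by simp
  qed
qed

lemma app_nf: "reduced r \<Longrightarrow> app P r = app (nf P) r"
proof (induction P)
  case Nil then show ?case by (simp add: nf_def)
next
  case (Cons x P)
  then have "app (x # P) r = consr x (app (nf P) r)" by simp
  also have "\<dots> = app (consr x (nf P)) r" using Cons.prems by (simp add: consr_app)
  finally show ?case by (simp add: nf_def)
qed

lemma nf_append: "nf (P @ Q) = app P (nf Q)"
  by (simp add: nf_def)

lemma nf_nf_append: "nf (nf P @ Q) = nf (P @ Q)"
  by (metis app_nf nf_append nf_reduced)

lemma nf_Cons: "nf (x # P) = consr x (nf P)"
  by (simp add: nf_def)

lemma nf_Nil[simp]: "nf [] = []" by (simp add: nf_def)

lemma inv_word_append[simp]: "inv_word (P @ Q) = inv_word Q @ inv_word P"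
  by (induction P) auto

lemma inv_word_inv_word[simp]: "inv_word (inv_word P) = P"
  by (induction P) auto

lemma app_inv_cancel[simp]: "reduced r \<Longrightarrow> app (inv_word W) (app W r) = r"
proof (induction W arbitrary: r)
  case Nil then show ?case by simp
next
  case (Cons x W)
  have "app (inv_word (x # W)) (app (x # W) r) = app (inv_word W) (consr (fst x, \<not> snd x) (consr x (app W r)))"
    by simp
  also have "\<dots> = app (inv_word W) (app W r)"
    using Cons.prems by (cases x) simp
  also have "\<dots> = r" using Cons by simp
  finally show ?case .
qed

lemma app_inv_cancel2[simp]: "reduced r \<Longrightarrow> app W (app (inv_word W) r) = r"
  using app_inv_cancel[of r "inv_word W"] by simp

lemma reduced_snoc_iff: "reduced (w @ [x]) \<longleftrightarrow> reduced w \<and> (w = [] \<or> \<not> (fst (last w) = fst x \<and> snd (last w) \<noteq> snd x))"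
proof (induction w)
  case Nil then show ?case by simp
next
  case (Cons y w)
  then show ?case by (cases w) (auto simp: reduced_Cons)
qed

lemma reduced_append_left: "reduced (w @ u) \<Longrightarrow> reduced w"
proof (induction w)
  case Nil then show ?case by simp
next
  case (Cons y w) then show ?case by (cases w) (auto simp: reduced_Cons)
qed

lemma nf_snoc: "reduced w \<Longrightarrow> nf (w @ [x]) = (if w \<noteq> [] \<and> fst (last w) = fst x \<and> snd (last w) \<noteq> snd x then butlast w else w @ [x])"
proof (induction w)
  case Nil then show ?case by (simp add: nf_def)
next
  case (Cons y w)
  have rw: "reduced w" using Cons.prems reduced_tl by blast
  show ?case
  proof (cases "w = []")
    case True then show ?thesis by (cases x; cases y) (auto simp: nf_def)
  next
    case False
    show ?thesis
    proof (cases "fst (last w) = fst x \<and> snd (last w) \<noteq> snd x")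
      case True
      then have "nf (w @ [x]) = butlast w" using Cons.IH rw False by simp
      then have "nf ((y # w) @ [x]) = consr y (butlast w)" by (simp add: nf_Cons)
      also have "\<dots> = y # butlast w"
      proof -
        have "reduced (y # w)" by fact
        then have "reduced (y # butlast w)"
          using False by (metis append_Cons append_butlast_last_id reduced_append_left)
        then show ?thesis by (rule consr_reduced_eq)
      qed
      finally show ?thesis using True False by simp
    next
      case F2: False
      then have "nf (w @ [x]) = w @ [x]" using Cons.IH rw False by auto
      then have "nf ((y # w) @ [x]) = consr y (w @ [x])" by (simp add: nf_Cons)
      also have "\<dots> = y # w @ [x]"
      proof -
        have "reduced (y # w @ [x])" using reduced_snoc_iff[of "y # w" x] Cons.prems F2 False
          by auto
        then show ?thesis by (rule consr_reduced_eq)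
      qed
      finally show ?thesis using F2 False by auto
    qed
  qed
qed


lemma vb3_eq_ctx: "vb3_eq u w \<Longrightarrow> vb3_eq (p @ u @ q) (p @ w @ q)"
proof (induction rule: vb3_eq.induct)
  case (refl w) then show ?case by (rule vb3_eq.refl)
next
  case (sym u w) then show ?case using vb3_eq.sym by blast
next
  case (trans u v w) then show ?case by (metis vb3_eq.trans)
next
  case (cancel u g e w)
  show ?case using vb3_eq.cancel[of "p @ u" g e "w @ q"] by simp
next
  case (relator r u w)
  show ?case using vb3_eq.relator[OF relator, of "p @ u" "w @ q"] by simp
qed

lemma vb3_eq_append: "vb3_eq u u' \<Longrightarrow> vb3_eq w w' \<Longrightarrow> vb3_eq (u @ w) (u' @ w')"
  by (metis vb3_eq.trans vb3_eq_ctx append_Nil append_Nil2)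

lemma vb3_class_eq: "vb3_class u = vb3_class w \<longleftrightarrow> vb3_eq u w"
proof
  assume "vb3_class u = vb3_class w"
  then have "w \<in> vb3_class u" by (auto simp: vb3_class_def vb3_rel_def intro: vb3_eq.refl)
  then show "vb3_eq u w" by (simp add: vb3_class_def vb3_rel_def)
next
  assume h: "vb3_eq u w"
  show "vb3_class u = vb3_class w"
    unfolding vb3_class_def vb3_rel_def
    using h by (auto intro: vb3_eq.trans vb3_eq.sym)
qed

lemma vb3_class_mem: "a \<in> vb3_class w \<longleftrightarrow> vb3_eq w a"
  by (simp add: vb3_class_def vb3_rel_def)

lemma carrier_VB3: "carrier VB3 = range vb3_class"
  by (auto simp: VB3_def quotient_def vb3_class_def)

lemma vb3_class_carrier[simp]: "vb3_class w \<in> carrier VB3"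
  by (simp add: carrier_VB3)

lemma some_class: "vb3_eq w (SOME a. a \<in> vb3_class w)"
proof -
  have "w \<in> vb3_class w" by (simp add: vb3_class_mem vb3_eq.refl)
  then have "(SOME a. a \<in> vb3_class w) \<in> vb3_class w" by (rule someI)
  then show ?thesis by (simp add: vb3_class_mem)
qed

lemma mult_class[simp]: "vb3_class a \<otimes>\<^bsub>VB3\<^esub> vb3_class b = vb3_class (a @ b)"
proof -
  have "vb3_eq (a @ b) ((SOME x. x \<in> vb3_class a) @ (SOME x. x \<in> vb3_class b))"
    by (intro vb3_eq_append some_class)
  then show ?thesis by (simp add: VB3_def vb3_class_eq vb3_eq.sym)
qed

lemma one_VB3: "\<one>\<^bsub>VB3\<^esub> = vb3_class []"
  by (simp add: VB3_def)

lemma inv_word_cancel: "vb3_eq (inv_word w @ w) []"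
proof (induction w)
  case Nil then show ?case by (simp add: vb3_eq.refl)
next
  case (Cons x w)
  obtain g e where x: "x = (g, e)" by (cases x)
  have "vb3_eq (inv_word w @ [(g, \<not> e), (g, \<not> \<not> e)] @ w) (inv_word w @ w)"
    by (rule vb3_eq.cancel)
  then have "vb3_eq (inv_word (x # w) @ x # w) (inv_word w @ w)" using x by simp
  then show ?case using Cons vb3_eq.trans by blast
qed

lemma group_VB3: "group VB3"
proof (rule groupI)
  fix x y assume "x \<in> carrier VB3" "y \<in> carrier VB3"
  then show "x \<otimes>\<^bsub>VB3\<^esub> y \<in> carrier VB3" by (auto simp: carrier_VB3)
next
  show "\<one>\<^bsub>VB3\<^esub> \<in> carrier VB3" by (simp add: one_VB3)
next
  fix x y z assume "x \<in> carrier VB3" "y \<in> carrier VB3" "z \<in> carrier VB3"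
  then show "x \<otimes>\<^bsub>VB3\<^esub> y \<otimes>\<^bsub>VB3\<^esub> z = x \<otimes>\<^bsub>VB3\<^esub> (y \<otimes>\<^bsub>VB3\<^esub> z)"
    by (auto simp: carrier_VB3)
next
  fix x assume "x \<in> carrier VB3"
  then show "\<one>\<^bsub>VB3\<^esub> \<otimes>\<^bsub>VB3\<^esub> x = x" by (auto simp: carrier_VB3 one_VB3)
next
  fix x assume "x \<in> carrier VB3"
  then obtain w where w: "x = vb3_class w" by (auto simp: carrier_VB3)
  show "\<exists>y\<in>carrier VB3. y \<otimes>\<^bsub>VB3\<^esub> x = \<one>\<^bsub>VB3\<^esub>"
    by (rule bexI[of _ "vb3_class (inv_word w)"])
       (simp_all add: w one_VB3 vb3_class_eq inv_word_cancel)
qed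

interpretation VB: group VB3 by (rule group_VB3)

lemma inv_class[simp]: "inv\<^bsub>VB3\<^esub> (vb3_class w) = vb3_class (inv_word w)"
proof -
  have "vb3_class (inv_word w) \<otimes>\<^bsub>VB3\<^esub> vb3_class w = \<one>\<^bsub>VB3\<^esub>"
    by (simp add: one_VB3 vb3_class_eq inv_word_cancel)
  then show ?thesis using VB.inv_equality by auto
qed

lemma word_perm_append: "word_perm (u @ w) = word_perm u \<circ> word_perm w"
  by (induction u) (auto simp: word_perm_def)

lemma word_perm_Cons: "word_perm (x # w) = gen_perm (fst x) \<circ> word_perm w"
  by (simp add: word_perm_def)

lemma gen_perm_invol: "gen_perm g \<circ> gen_perm g = id"
  by (cases g) (auto simp: transp_def fun_eq_iff)

lemma word_perm_relators: "r \<in> vb3_relators \<Longrightarrow> word_perm r = id"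
  by (auto simp: vb3_relators_def word_perm_def transp_def fun_eq_iff)

lemma word_perm_eq: "vb3_eq u w \<Longrightarrow> word_perm u = word_perm w"
proof (induction rule: vb3_eq.induct)
  case (cancel u g e w)
  have "word_perm [(g, e), (g, \<not> e)] = id"
    using gen_perm_invol[of g] by (simp add: word_perm_def)
  moreover have "word_perm (u @ [(g, e), (g, \<not> e)] @ w) = word_perm u \<circ> word_perm [(g, e), (g, \<not> e)] \<circ> word_perm w"
    by (simp only: word_perm_append o_assoc)
  ultimately show ?case by (simp add: word_perm_append)
next
  case (relator r u w)
  then show ?case by (simp add: word_perm_append word_perm_relators)
qed auto


section \<open>Endomorphisms of free groups given by letter images\<close>

definition limg :: "('g \<Rightarrow> 'h word) \<Rightarrow> 'g \<times> bool \<Rightarrow> 'h word" where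
  "limg img x = (if snd x then inv_word (img (fst x)) else img (fst x))"

definition ext :: "('g \<Rightarrow> 'h word) \<Rightarrow> 'g word \<Rightarrow> 'h word" where
  "ext img P = concat (map (limg img) P)"

definition Phi :: "('g \<Rightarrow> 'h word) \<Rightarrow> 'g word \<Rightarrow> 'h word" where
  "Phi img f = nf (ext img f)"

lemma ext_Nil[simp]: "ext img [] = []" by (simp add: ext_def)
lemma ext_Cons[simp]: "ext img (x # P) = limg img x @ ext img P" by (simp add: ext_def)
lemma ext_append[simp]: "ext img (P @ Q) = ext img P @ ext img Q" by (simp add: ext_def)

lemma limg_pos[simp]: "limg img (g, False) = img g" by (simp add: limg_def)
lemma limg_neg[simp]: "limg img (g, True) = inv_word (img g)" by (simp add: limg_def)

lemma ext_inv_word: "ext img (inv_word P) = inv_word (ext img P)"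
  by (induction P) (auto simp: limg_def)

lemma app_nf_eq: "reduced r \<Longrightarrow> nf W = nf W' \<Longrightarrow> app W r = app W' r"
  by (metis app_nf)

lemma nf_inv_word_cong: "nf W = nf W' \<Longrightarrow> nf (inv_word W) = nf (inv_word W')"
proof -
  assume h: "nf W = nf W'"
  have "nf (inv_word W) = app (inv_word W) (app W' (app (inv_word W') []))"
    by (simp add: nf_def)
  also have "\<dots> = app (inv_word W) (app W (app (inv_word W') []))"
  proof -
    have "app W' (app (inv_word W') []) = app W (app (inv_word W') [])"
      by (rule app_nf_eq[OF _ h[symmetric]]) simp
    then show ?thesis by simp
  qed
  also have "\<dots> = nf (inv_word W')" by (simp add: nf_def)
  finally show ?thesis .
qed

lemma ext_cancel: "reduced r \<Longrightarrow> app (limg img x @ limg img (invl x) @ Q) r = app Q r"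
proof -
  assume r: "reduced r"
  obtain g e where x: "x = (g, e)" by (cases x)
  show ?thesis
  proof (cases e)
    case True
    then show ?thesis using x r by (simp add: invl_def)
  next
    case False
    then show ?thesis using x r app_inv_cancel2[of "app Q r" "img g"] by (simp add: invl_def)
  qed
qed

lemma ext_nf: "nf (ext img (nf P)) = nf (ext img P)"
proof (induction P)
  case Nil then show ?case by simp
next
  case (Cons x P)
  have key: "nf (ext img (consr x r)) = nf (limg img x @ ext img r)" if "reduced r" for r
  proof (cases r)
    case Nil then show ?thesis by simp
  next
    case (Cons y r')
    show ?thesis
    proof (cases "fst y = fst x \<and> snd y \<noteq> snd x")
      case True
      then have y: "y = invl x" by (cases x; cases y) (auto simp: invl_def)
      have "nf (limg img x @ ext img r) = app (limg img x @ limg img (invl x) @ ext img r') []"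
        using Cons y by (simp add: nf_def)
      also have "\<dots> = nf (ext img r')" using ext_cancel[of "[]" img x "ext img r'"] by (simp add: nf_def)
      finally show ?thesis using Cons True by simp
    next
      case False then show ?thesis using Cons by (cases x; cases y) auto
    qed
  qed
  have "nf (ext img (nf (x # P))) = nf (ext img (consr x (nf P)))" by (simp add: nf_Cons)
  also have "\<dots> = nf (limg img x @ ext img (nf P))" using key by simp
  also have "\<dots> = app (limg img x) (nf (ext img (nf P)))" by (simp add: nf_append)
  also have "\<dots> = app (limg img x) (nf (ext img P))" using Cons.IH by simp
  also have "\<dots> = nf (ext img (x # P))" by (simp add: nf_append)
  finally show ?case .
qed

lemma Phi_reduced[simp]: "reduced (Phi img f)" by (simp add: Phi_def)

lemma Phi_consr[simp]: "reduced f \<Longrightarrow> Phi img (consr x f) = app (limg img x) (Phi img f)"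
proof -
  assume f: "reduced f"
  have "consr x f = nf (x # f)" using f by (simp add: nf_Cons nf_reduced_id)
  then have "Phi img (consr x f) = nf (ext img (x # f))" by (simp add: Phi_def ext_nf)
  then show ?thesis by (simp add: Phi_def nf_append)
qed

lemma Phi_app[simp]: "reduced f \<Longrightarrow> Phi img (app P f) = app (ext img P) (Phi img f)"
  by (induction P) auto

lemma Phi_Nil[simp]: "Phi img [] = []" by (simp add: Phi_def)

lemma nf_concat_map: "(\<And>x. x \<in> set P \<Longrightarrow> nf (G x) = [x]) \<Longrightarrow> nf (concat (map G P)) = nf P"
proof (induction P)
  case Nil then show ?case by simp
next
  case (Cons x P)
  have "nf (concat (map G (x # P))) = app (G x) (nf (concat (map G P)))" by (simp add: nf_append)
  also have "\<dots> = app (G x) (nf P)" using Cons by simp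
  also have "\<dots> = app (nf (G x)) (nf P)" by (simp add: app_nf[symmetric])
  also have "\<dots> = nf (x # P)" using Cons.prems by (simp add: nf_Cons)
  finally show ?case .
qed

lemma ext_concat: "ext img (concat L) = concat (map (ext img) L)"
  by (induction L) auto

lemma Phi_comp:
  assumes h: "\<And>i. i \<in> A \<Longrightarrow> nf (ext img1 (img2 i)) = [(i, False)]"
    and f: "reduced f" "fst ` set f \<subseteq> A"
  shows "Phi img1 (Phi img2 f) = f"
proof -
  have "Phi img1 (Phi img2 f) = nf (ext img1 (ext img2 f))" by (simp add: Phi_def ext_nf)
  also have "\<dots> = nf (concat (map (\<lambda>x. ext img1 (limg img2 x)) f))"
    by (simp add: ext_def[of img2] ext_concat comp_def)
  also have "\<dots> = nf f"
  proof (rule nf_concat_map)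
    fix x assume x: "x \<in> set f"
    obtain i e where xi: "x = (i, e)" by (cases x)
    have iA: "i \<in> A" using x xi f by force
    show "nf (ext img1 (limg img2 x)) = [x]"
    proof (cases e)
      case False then show ?thesis using h[OF iA] xi by simp
    next
      case True
      have "nf (ext img1 (limg img2 x)) = nf (inv_word (ext img1 (img2 i)))"
        using xi True by (simp add: ext_inv_word)
      also have "\<dots> = nf (inv_word [(i, False)])"
        by (rule nf_inv_word_cong) (simp add: h[OF iA] nf_reduced_id)
      also have "\<dots> = [x]" using xi True by (simp add: nf_def)
      finally show ?thesis .
    qed
  qed
  also have "\<dots> = f" using f by (simp add: nf_reduced_id)
  finally show ?thesis .
qed

lemma set_consr: "set (consr x r) \<subseteq> insert x (set r)"
  by (cases r) auto

lemma letters_consr: "fst ` set r \<subseteq> A \<Longrightarrow> fst x \<in> A \<Longrightarrow> fst ` set (consr x r) \<subseteq> A"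
  using set_consr[of x r] by blast

lemma letters_app: "fst ` set r \<subseteq> A \<Longrightarrow> fst ` set P \<subseteq> A \<Longrightarrow> fst ` set (app P r) \<subseteq> A"
proof (induction P)
  case Nil then show ?case by simp
next
  case (Cons x P)
  then have "fst ` set (app P r) \<subseteq> A" by auto
  moreover have "fst x \<in> A" using Cons.prems by auto
  ultimately have "fst ` set (consr x (app P r)) \<subseteq> A" by (rule letters_consr)
  then show ?case by simp
qed

lemma letters_nf: "fst ` set P \<subseteq> A \<Longrightarrow> fst ` set (nf P) \<subseteq> A"
  by (simp add: nf_def letters_app)

lemma letters_inv_word[simp]: "fst ` set (inv_word P) = fst ` set P"
  by (induction P) auto

lemma letters_limg: "fst ` set (limg img x) = fst ` set (img (fst x))"
  by (simp add: limg_def)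

lemma letters_Phi: "(\<And>i. i \<in> A \<Longrightarrow> fst ` set (img i) \<subseteq> B) \<Longrightarrow> fst ` set f \<subseteq> A \<Longrightarrow> fst ` set (Phi img f) \<subseteq> B"
proof -
  assume h: "\<And>i. i \<in> A \<Longrightarrow> fst ` set (img i) \<subseteq> B" and f: "fst ` set f \<subseteq> A"
  have e: "fst ` set (ext img f) = (\<Union>x\<in>set f. fst ` set (img (fst x)))"
    by (induction f) (simp_all add: letters_limg image_Un)
  have "fst ` set (ext img f) \<subseteq> B" unfolding e using h f by blast
  then show ?thesis unfolding Phi_def by (rule letters_nf)
qed


fun sw :: "v1gen \<Rightarrow> v1gen" where
  "sw G12 = G21" | "sw G21 = G12"

definition swapv :: "v1gen word \<Rightarrow> v1gen word" where
  "swapv v = map (\<lambda>x. (sw (fst x), snd x)) v"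

lemma sw_sw[simp]: "sw (sw g) = g" by (cases g) auto
lemma sw_eq_iff[simp]: "sw g = sw h \<longleftrightarrow> g = h" by (cases g; cases h) auto
lemma swapv_Nil[simp]: "swapv [] = []" by (simp add: swapv_def)
lemma swapv_Cons[simp]: "swapv (x # v) = (sw (fst x), snd x) # swapv v" by (simp add: swapv_def)
lemma swapv_append[simp]: "swapv (v @ w) = swapv v @ swapv w" by (simp add: swapv_def)
lemma swapv_swapv[simp]: "swapv (swapv v) = v" by (induction v) auto
lemma swapv_eq_Nil[simp]: "swapv v = [] \<longleftrightarrow> v = []" by (simp add: swapv_def)

lemma reduced_swapv[simp]: "reduced (swapv v) = reduced v"
  by (induction v rule: reduced.induct) auto

lemma consr_swapv: "consr (sw (fst x), snd x) (swapv r) = swapv (consr x r)"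
  by (cases r) auto

lemma nf_swapv: "nf (swapv P) = swapv (nf P)"
  by (induction P) (auto simp: nf_Cons consr_swapv)

lemma hd_swapv: "v \<noteq> [] \<Longrightarrow> fst (hd (swapv v)) = sw (fst (hd v))"
  by (cases v) auto

lemma nf_two: "nf [x, invl x] = []"
  by (cases x) (simp add: nf_def invl_def)

lemma nf_snoc_cancel: "reduced v \<Longrightarrow> nf (nf (v @ [x]) @ [invl x]) = v"
proof -
  assume v: "reduced v"
  have "nf (nf (v @ [x]) @ [invl x]) = nf (v @ [x, invl x])" by (simp add: nf_nf_append)
  also have "\<dots> = app v (nf [x, invl x])" by (simp add: nf_append[symmetric])
  also have "\<dots> = v" using v by (simp add: nf_two nf_def[symmetric] nf_reduced_id)
  finally show ?thesis .
qed

lemma hd_nf_snoc: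
  assumes "reduced w" "w \<noteq> []" "nf (w @ [x]) \<noteq> []"
  shows "hd (nf (w @ [x])) = hd w"
proof -
  have "butlast w \<noteq> [] \<Longrightarrow> hd (butlast w) = hd w"
    by (cases w rule: rev_cases) auto
  then show ?thesis using assms by (auto simp: nf_snoc)
qed

lemma nf_single[simp]: "nf [x] = [x]" by (simp add: nf_def)

lemma nf_snoc_Nil: "reduced w \<Longrightarrow> nf (w @ [x]) = [] \<Longrightarrow> w = [invl x]"
proof -
  assume w: "reduced w" and n: "nf (w @ [x]) = []"
  show ?thesis
  proof (cases "w \<noteq> [] \<and> fst (last w) = fst x \<and> snd (last w) \<noteq> snd x")
    case True
    then have "butlast w = []" using n nf_snoc[OF w, of x] by simp
    then have "w = [last w]" using True by (cases w rule: rev_cases) auto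
    moreover have "last w = invl x" using True by (cases "last w"; cases x) (auto simp: invl_def)
    ultimately show ?thesis by simp
  next
    case False
    then show ?thesis using n nf_snoc[OF w, of x] by (auto split: if_splits)
  qed
qed

section \<open>The model: images of the basis letters\<close>

lemma in_basis[simp]:
  "L13 \<in> basis_set" "L23 \<in> basis_set"
  "L31 v \<in> basis_set \<longleftrightarrow> reduced v \<and> (v = [] \<or> fst (hd v) = G21)"
  "L32 u \<in> basis_set \<longleftrightarrow> reduced u \<and> (u = [] \<or> fst (hd u) = G12)"
  by (auto simp: basis_set_def)

fun rho_img :: "basis_idx \<Rightarrow> basis_idx word" where
  "rho_img L13 = [(L23, False)]"
| "rho_img L23 = [(L13, False)]"
| "rho_img (L31 v) = [(L32 (swapv v), False)]"
| "rho_img (L32 u) = [(L31 (swapv u), False)]"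

fun sig_img :: "basis_idx \<Rightarrow> basis_idx word" where
  "sig_img L13 = [(L13, False), (L23, False), (L32 [], False), (L13, True), (L32 [(G12, False)], True)]"
| "sig_img L23 = [(L32 [(G12, False)], False), (L13, False), (L32 [], True)]"
| "sig_img (L31 v) = [(L32 (nf (swapv v @ [(G12, False)])), False)]"
| "sig_img (L32 u) = (if u = [] then [(L32 [], False), (L31 [], False), (L32 [(G12, False)], True)]
                      else [(L31 (nf (swapv u @ [(G12, False)])), False)])"

fun sigi_img :: "basis_idx \<Rightarrow> basis_idx word" where
  "sigi_img L13 = [(L31 [], True), (L23, False), (L31 [(G21, True)], False)]"
| "sigi_img L23 = [(L31 [(G21, True)], True), (L23, True), (L31 [], False), (L13, False), (L23, False)]"
| "sigi_img (L31 v) = (if v = [] then [(L31 [(G21, True)], True), (L32 [], False), (L31 [], False)]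
                       else [(L32 (swapv (nf (v @ [(G12, True)]))), False)])"
| "sigi_img (L32 u) = [(L31 (swapv (nf (u @ [(G12, True)]))), False)]"

lemma rho_img_basis: assumes "i \<in> basis_set" shows "fst ` set (rho_img i) \<subseteq> basis_set"
proof (cases i)
  case (L31 v) then show ?thesis using assms by (cases "v = []") (auto simp: hd_swapv)
next
  case (L32 v) then show ?thesis using assms by (cases "v = []") (auto simp: hd_swapv)
qed auto

lemma sig_img_basis: "i \<in> basis_set \<Longrightarrow> fst ` set (sig_img i) \<subseteq> basis_set"
proof (cases i)
  case (L31 v)
  assume "i \<in> basis_set"
  then have v: "reduced v" "v = [] \<or> fst (hd v) = G21" using L31 by auto
  let ?w = "nf (swapv v @ [(G12, False)])"
  have "?w = [] \<or> fst (hd ?w) = G12"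
  proof (cases "v = []")
    case True then show ?thesis by simp
  next
    case False
    show ?thesis
    proof (cases "?w = []")
      case False2: False
      have "hd ?w = hd (swapv v)" by (rule hd_nf_snoc) (use v False False2 in auto)
      then show ?thesis using hd_swapv[OF False] v False by auto
    qed simp
  qed
  then show ?thesis using L31 by simp
next
  case (L32 u)
  assume "i \<in> basis_set"
  then have u: "reduced u" "u = [] \<or> fst (hd u) = G12" using L32 by auto
  show ?thesis
  proof (cases "u = []")
    case True then show ?thesis using L32 by simp
  next
    case False
    let ?w = "nf (swapv u @ [(G12, False)])"
    have ne: "?w \<noteq> []"
    proof
      assume "?w = []"
      then have "swapv u = [(G12, True)]"
        using nf_snoc_Nil[of "swapv u" "(G12, False)"] u by (simp add: invl_def)
      then show False using u False hd_swapv[OF False] by (cases u) auto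
    qed
    then have "fst (hd ?w) = G21" using hd_nf_snoc[of "swapv u" "(G12, False)"] u False hd_swapv[OF False] by auto
    then show ?thesis using L32 False ne by simp
  qed
qed auto

lemma sigi_img_basis: "i \<in> basis_set \<Longrightarrow> fst ` set (sigi_img i) \<subseteq> basis_set"
proof (cases i)
  case (L31 v)
  assume "i \<in> basis_set"
  then have v: "reduced v" "v = [] \<or> fst (hd v) = G21" using L31 by auto
  show ?thesis
  proof (cases "v = []")
    case True then show ?thesis using L31 by simp
  next
    case False
    let ?w = "nf (v @ [(G12, True)])"
    have ne: "?w \<noteq> []"
    proof
      assume "?w = []"
      then have "v = [(G12, False)]"
        using nf_snoc_Nil[of v "(G12, True)"] v by (simp add: invl_def)
      then show False using v by auto
    qed
    then have "fst (hd ?w) = G21" using hd_nf_snoc[of v "(G12, True)"] v False by auto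
    then show ?thesis using L31 False ne by (simp add: hd_swapv)
  qed
next
  case (L32 u)
  assume "i \<in> basis_set"
  then have u: "reduced u" "u = [] \<or> fst (hd u) = G12" using L32 by auto
  let ?w = "nf (u @ [(G12, True)])"
  have "?w = [] \<or> fst (hd ?w) = G12"
  proof (cases "u = []")
    case True then show ?thesis by simp
  next
    case False
    show ?thesis
    proof (cases "?w = []")
      case False2: False
      have "hd ?w = hd u" by (rule hd_nf_snoc) (use u False False2 in auto)
      then show ?thesis using u False by auto
    qed simp
  qed
  then show ?thesis using L32 by (cases "?w = []") (auto simp: hd_swapv)
qed auto

lemma nf_snoc_cancel': "reduced v \<Longrightarrow> e' = (\<not> e) \<Longrightarrow> nf (nf (v @ [(g, e)]) @ [(g, e')]) = v"
  using nf_snoc_cancel[of v "(g, e)"] by (simp add: invl_def)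

lemma rho_rho: "i \<in> basis_set \<Longrightarrow> nf (ext rho_img (rho_img i)) = [(i, False)]"
  by (cases i) auto

lemma sig_sigi: assumes "i \<in> basis_set" shows "nf (ext sig_img (sigi_img i)) = [(i, False)]"
proof (cases i)
  case (L31 v)
  then have v: "reduced v" "v = [] \<or> fst (hd v) = G21" using assms by auto
  show ?thesis
  proof (cases "v = []")
    case True then show ?thesis using L31 by (simp add: nf_def)
  next
    case False
    have ne: "nf (v @ [(G12, True)]) \<noteq> []"
    proof
      assume "nf (v @ [(G12, True)]) = []"
      then have "v = [(G12, False)]" using nf_snoc_Nil[of v "(G12, True)"] v by (simp add: invl_def)
      then show False using v by auto
    qed
    have "nf (nf (v @ [(G12, True)]) @ [(G12, False)]) = v" using v by (simp add: nf_snoc_cancel')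
    then show ?thesis using L31 False ne by simp
  qed
next
  case (L32 u)
  then have u: "reduced u" using assms by auto
  have "nf (nf (u @ [(G12, True)]) @ [(G12, False)]) = u" using u by (simp add: nf_snoc_cancel')
  then show ?thesis using L32 by simp
qed (simp_all add: nf_def)

lemma sigi_sig: assumes "i \<in> basis_set" shows "nf (ext sigi_img (sig_img i)) = [(i, False)]"
proof (cases i)
  case (L31 v)
  then have v: "reduced v" using assms by auto
  have "nf (nf (swapv v @ [(G12, False)]) @ [(G12, True)]) = swapv v" using v by (simp add: nf_snoc_cancel')
  then show ?thesis using L31 by simp
next
  case (L32 u)
  then have u: "reduced u" "u = [] \<or> fst (hd u) = G12" using assms by auto
  show ?thesis
  proof (cases "u = []")
    case True then show ?thesis using L32 by (simp add: nf_def)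
  next
    case False
    have ne: "nf (swapv u @ [(G12, False)]) \<noteq> []"
    proof
      assume "nf (swapv u @ [(G12, False)]) = []"
      then have "swapv u = [(G12, True)]" using nf_snoc_Nil[of "swapv u" "(G12, False)"] u by (simp add: invl_def)
      then show False using u False hd_swapv[OF False] by (cases u) auto
    qed
    have "nf (nf (swapv u @ [(G12, False)]) @ [(G12, True)]) = swapv u" using u by (simp add: nf_snoc_cancel')
    then show ?thesis using L32 False ne by simp
  qed
qed (simp_all add: nf_def)

section \<open>The action of VB3\<close>

datatype blk = K1 | K2 | K3

definition lb :: "basis_idx word \<Rightarrow> bool" where
  "lb f \<longleftrightarrow> fst ` set f \<subseteq> basis_set"

lemma lb_Nil[simp]: "lb []" by (simp add: lb_def)

lemma lb_consr[simp]: "lb f \<Longrightarrow> fst x \<in> basis_set \<Longrightarrow> lb (consr x f)"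
  unfolding lb_def by (rule letters_consr)

lemma lb_Phi_rho[simp]: "lb f \<Longrightarrow> lb (Phi rho_img f)"
  unfolding lb_def by (rule letters_Phi[OF rho_img_basis])
lemma lb_Phi_sig[simp]: "lb f \<Longrightarrow> lb (Phi sig_img f)"
  unfolding lb_def by (rule letters_Phi[OF sig_img_basis])
lemma lb_Phi_sigi[simp]: "lb f \<Longrightarrow> lb (Phi sigi_img f)"
  unfolding lb_def by (rule letters_Phi[OF sigi_img_basis])

lemma Phi_rho_rho[simp]: "reduced f \<Longrightarrow> lb f \<Longrightarrow> Phi rho_img (Phi rho_img f) = f"
  unfolding lb_def by (rule Phi_comp[OF rho_rho])
lemma Phi_sig_sigi[simp]: "reduced f \<Longrightarrow> lb f \<Longrightarrow> Phi sig_img (Phi sigi_img f) = f"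
  unfolding lb_def by (rule Phi_comp[OF sig_sigi])
lemma Phi_sigi_sig[simp]: "reduced f \<Longrightarrow> lb f \<Longrightarrow> Phi sigi_img (Phi sig_img f) = f"
  unfolding lb_def by (rule Phi_comp[OF sigi_sig])

fun act :: "vbgen \<times> bool \<Rightarrow> basis_idx word \<times> blk \<Rightarrow> basis_idx word \<times> blk" where
  "act (R1, e) (f, K3) = (Phi rho_img f, K3)"
| "act (R1, e) (f, K2) = (f, K1)"
| "act (R1, e) (f, K1) = (f, K2)"
| "act (R2, e) (f, K3) = (f, K2)"
| "act (R2, e) (f, K2) = (f, K3)"
| "act (R2, e) (f, K1) = (Phi rho_img f, K1)"
| "act (S1, False) (f, K3) = (Phi sig_img f, K3)"
| "act (S1, False) (f, K2) = (consr (L31 [], True) f, K1)"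
| "act (S1, False) (f, K1) = (consr (L13, True) f, K2)"
| "act (S1, True) (f, K3) = (Phi sigi_img f, K3)"
| "act (S1, True) (f, K1) = (consr (L31 [], False) f, K2)"
| "act (S1, True) (f, K2) = (consr (L13, False) f, K1)"
| "act (S2, False) (f, K3) = (consr (L32 [], True) f, K2)"
| "act (S2, False) (f, K2) = (consr (L23, True) f, K3)"
| "act (S2, False) (f, K1) = (Phi sig_img f, K1)"
| "act (S2, True) (f, K2) = (consr (L32 [], False) f, K3)"
| "act (S2, True) (f, K3) = (consr (L23, False) f, K2)"
| "act (S2, True) (f, K1) = (Phi sigi_img f, K1)"

definition act_word :: "vbgen word \<Rightarrow> basis_idx word \<times> blk \<Rightarrow> basis_idx word \<times> blk" where
  "act_word w s = foldr act w s"

lemma act_word_Nil[simp]: "act_word [] s = s" by (simp add: act_word_def)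
lemma act_word_Cons[simp]: "act_word (x # w) s = act x (act_word w s)" by (simp add: act_word_def)
lemma act_word_append[simp]: "act_word (u @ w) s = act_word u (act_word w s)" by (simp add: act_word_def)

definition good :: "basis_idx word \<times> blk \<Rightarrow> bool" where
  "good s \<longleftrightarrow> reduced (fst s) \<and> lb (fst s)"

lemma act_good: "good s \<Longrightarrow> good (act x s)"
  by (cases s; cases x; rename_tac f k g e; case_tac g; case_tac e; case_tac k) (auto simp: good_def)

lemma act_word_good: "good s \<Longrightarrow> good (act_word w s)"
  by (induction w) (auto intro: act_good)

lemma act_cancel: "good s \<Longrightarrow> act (g, e) (act (g, \<not> e) s) = s"
  by (cases s; rename_tac f k; case_tac g; case_tac e; case_tac k) (auto simp: good_def)

lemma act_relator: "r \<in> vb3_relators \<Longrightarrow> good s \<Longrightarrow> act_word r s = s"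
  by (cases s; rename_tac f k; case_tac k) (auto simp: good_def vb3_relators_def nf_Cons)

lemma act_word_eq: "vb3_eq u w \<Longrightarrow> good s \<Longrightarrow> act_word u s = act_word w s"
proof (induction u w arbitrary: s rule: vb3_eq.induct)
  case (cancel u g e w)
  have "act (g, e) (act (g, \<not> e) (act_word w s)) = act_word w s"
    using act_cancel act_word_good[OF cancel.prems] by blast
  then show ?case by simp
next
  case (relator r u w)
  have "act_word r (act_word w s) = act_word w s"
    using act_relator[OF relator.hyps] act_word_good[OF relator.prems] by blast
  then show ?case by simp
qed auto


definition PhiV :: "vbgen word set \<Rightarrow> basis_idx word \<times> blk \<Rightarrow> basis_idx word \<times> blk" where
  "PhiV A s = act_word (SOME a. a \<in> A) s"

lemma PhiV_class: "good s \<Longrightarrow> PhiV (vb3_class w) s = act_word w s"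
  unfolding PhiV_def using act_word_eq[OF some_class] by metis

lemma PhiV_good: "A \<in> carrier VB3 \<Longrightarrow> good s \<Longrightarrow> good (PhiV A s)"
  by (auto simp: carrier_VB3 PhiV_class act_word_good)

lemma PhiV_mult: "A \<in> carrier VB3 \<Longrightarrow> B \<in> carrier VB3 \<Longrightarrow> good s \<Longrightarrow>
    PhiV (A \<otimes>\<^bsub>VB3\<^esub> B) s = PhiV A (PhiV B s)"
  by (auto simp: carrier_VB3 PhiV_class act_word_good)

lemma PhiV_one: "good s \<Longrightarrow> PhiV \<one>\<^bsub>VB3\<^esub> s = s"
  by (simp add: one_VB3 PhiV_class)

lemma PhiV_inv: "A \<in> carrier VB3 \<Longrightarrow> good s \<Longrightarrow> PhiV (inv\<^bsub>VB3\<^esub> A) (PhiV A s) = s"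
proof -
  assume "A \<in> carrier VB3" "good s"
  then obtain w where w: "A = vb3_class w" by (auto simp: carrier_VB3)
  have "PhiV (inv\<^bsub>VB3\<^esub> A) (PhiV A s) = act_word (inv_word w @ w) s"
    using w \<open>good s\<close> by (simp add: PhiV_class act_word_good)
  also have "\<dots> = act_word [] s" by (rule act_word_eq[OF inv_word_cancel \<open>good s\<close>])
  finally show ?thesis by simp
qed

lemma class_simps:
  "sigma1 = vb3_class [(S1, False)]" "sigma2 = vb3_class [(S2, False)]"
  "rho1 = vb3_class [(R1, False)]" "rho2 = vb3_class [(R2, False)]"
  by (simp_all add: sigma1_def sigma2_def rho1_def rho2_def)

lemma lam_classes:
  "lam12 = vb3_class [(R1, False), (S1, True)]"
  "lam21 = vb3_class [(S1, True), (R1, False)]"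
  "lam23 = vb3_class [(R2, False), (S2, True)]"
  "lam32 = vb3_class [(S2, True), (R2, False)]"
  "lam13 = vb3_class [(R2, False), (R1, False), (S1, True), (R2, False)]"
  "lam31 = vb3_class [(R2, False), (S1, True), (R1, False), (R2, False)]"
  by (simp_all add: lam12_def lam21_def lam23_def lam32_def lam13_def lam31_def class_simps)

lemma good_simp: "good (f, k) \<longleftrightarrow> reduced f \<and> lb f" by (simp add: good_def)

fun autv :: "v1gen \<times> bool \<Rightarrow> basis_idx word \<Rightarrow> basis_idx word" where
  "autv (G12, False) f = Phi rho_img (Phi sigi_img f)"
| "autv (G12, True) f = Phi sig_img (Phi rho_img f)"
| "autv (G21, False) f = Phi sigi_img (Phi rho_img f)"
| "autv (G21, True) f = Phi rho_img (Phi sig_img f)"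

lemma v1_letter_class: "letter_eval VB3 v1_val x = vb3_class
   (case x of (G12, False) \<Rightarrow> [(R1, False), (S1, True)] | (G12, True) \<Rightarrow> [(S1, False), (R1, True)]
            | (G21, False) \<Rightarrow> [(S1, True), (R1, False)] | (G21, True) \<Rightarrow> [(R1, True), (S1, False)])"
  by (cases x; rename_tac g e; case_tac g; case_tac e) (simp_all add: letter_eval_def lam_classes)

lemma v1_letter_carrier: "letter_eval VB3 v1_val x \<in> carrier VB3"
  by (simp add: v1_letter_class)

lemma v1_word_carrier: "word_eval VB3 v1_val v \<in> carrier VB3"
  by (induction v) (auto simp: word_eval_def one_VB3 v1_letter_carrier)

lemma autv_good: "reduced f \<Longrightarrow> lb f \<Longrightarrow> reduced (autv x f) \<and> lb (autv x f)"
  by (cases x; rename_tac g e; case_tac g; case_tac e) auto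

lemma PhiV_v1_letter: "good (f, K3) \<Longrightarrow> PhiV (letter_eval VB3 v1_val x) (f, K3) = (autv x f, K3)"
  by (cases x; rename_tac g e; case_tac g; case_tac e) (auto simp: v1_letter_class PhiV_class good_simp)

lemma PhiV_v1_word: "good (f, K3) \<Longrightarrow> PhiV (word_eval VB3 v1_val v) (f, K3) = (foldr autv v f, K3)"
proof (induction v arbitrary: f)
  case Nil then show ?case by (simp add: word_eval_def PhiV_one)
next
  case (Cons x v)
  have g: "good (foldr autv v f, K3)"
  proof -
    have "good (PhiV (word_eval VB3 v1_val v) (f, K3))" using PhiV_good[OF v1_word_carrier Cons.prems] .
    then show ?thesis using Cons by simp
  qed
  have "word_eval VB3 v1_val (x # v) = letter_eval VB3 v1_val x \<otimes>\<^bsub>VB3\<^esub> word_eval VB3 v1_val v"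
    by (simp add: word_eval_def)
  then have "PhiV (word_eval VB3 v1_val (x # v)) (f, K3) = PhiV (letter_eval VB3 v1_val x) (foldr autv v f, K3)"
    using Cons PhiV_mult[OF v1_letter_carrier v1_word_carrier Cons.prems] by simp
  also have "\<dots> = (foldr autv (x # v) f, K3)" using PhiV_v1_letter[OF g] by simp
  finally show ?case .
qed

lemma nf_cancel_pair: "reduced v \<Longrightarrow> e' = (\<not> e) \<Longrightarrow> nf (v @ [(g, e), (g, e')]) = v"
proof -
  assume "reduced v" "e' = (\<not> e)"
  then have "nf [(g, e), (g, e')] = []" by (simp add: nf_Cons)
  then have "nf (v @ [(g, e), (g, e')]) = nf v" by (simp add: nf_append nf_def)
  then show ?thesis using \<open>reduced v\<close> by (simp add: nf_reduced_id)
qed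

lemma shift31: assumes "reduced v" "reduced f" "lb f"
  shows "autv x (consr (L31 (v @ [x]), False) f) = consr (L31 v, False) (autv x f)"
  using assms by (cases x; rename_tac g e; case_tac g; case_tac e) (simp_all add: nf_cancel_pair)

lemma shift32: assumes "reduced u" "reduced f" "lb f"
  shows "autv x (consr (L32 (u @ [x]), False) f) = consr (L32 u, False) (autv x f)"
  using assms by (cases x; rename_tac g e; case_tac g; case_tac e) (simp_all add: nf_cancel_pair)

lemma conj31: "L31 v \<in> basis_set \<Longrightarrow> reduced f \<Longrightarrow> lb f \<Longrightarrow>
    foldr autv v (consr (L31 v, False) f) = consr (L31 [], False) (foldr autv v f)"
proof (induction v arbitrary: f rule: rev_induct)
  case Nil then show ?case by simp
next
  case (snoc x w)
  have rw: "reduced w" using snoc.prems(1) reduced_append_left by auto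
  have bw: "L31 w \<in> basis_set"
    using snoc.prems(1) rw by (cases w) auto
  have ga: "reduced (autv x f)" "lb (autv x f)" using autv_good[OF snoc.prems(2,3)] by auto
  have "foldr autv (w @ [x]) (consr (L31 (w @ [x]), False) f) = foldr autv w (consr (L31 w, False) (autv x f))"
    using shift31[OF rw snoc.prems(2,3)] by simp
  also have "\<dots> = consr (L31 [], False) (foldr autv w (autv x f))"
    using snoc.IH[OF bw ga] .
  finally show ?case by simp
qed

lemma conj32: "L32 v \<in> basis_set \<Longrightarrow> reduced f \<Longrightarrow> lb f \<Longrightarrow>
    foldr autv v (consr (L32 v, False) f) = consr (L32 [], False) (foldr autv v f)"
proof (induction v arbitrary: f rule: rev_induct)
  case Nil then show ?case by simp
next
  case (snoc x w)
  have rw: "reduced w" using snoc.prems(1) reduced_append_left by auto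
  have bw: "L32 w \<in> basis_set"
    using snoc.prems(1) rw by (cases w) auto
  have ga: "reduced (autv x f)" "lb (autv x f)" using autv_good[OF snoc.prems(2,3)] by auto
  have "foldr autv (w @ [x]) (consr (L32 (w @ [x]), False) f) = foldr autv w (consr (L32 w, False) (autv x f))"
    using shift32[OF rw snoc.prems(2,3)] by simp
  also have "\<dots> = consr (L32 [], False) (foldr autv w (autv x f))"
    using snoc.IH[OF bw ga] .
  finally show ?case by simp
qed

lemma lam_carrier[simp]: "lam12 \<in> carrier VB3" "lam21 \<in> carrier VB3" "lam13 \<in> carrier VB3"
  "lam31 \<in> carrier VB3" "lam23 \<in> carrier VB3" "lam32 \<in> carrier VB3"
  by (simp_all add: lam_classes)

lemma PhiV_lam31: "good (f, K3) \<Longrightarrow> PhiV lam31 (f, K3) = (consr (L31 [], False) f, K3)"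
  by (simp add: lam_classes PhiV_class)
lemma PhiV_lam32: "good (f, K3) \<Longrightarrow> PhiV lam32 (f, K3) = (consr (L32 [], False) f, K3)"
  by (simp add: lam_classes PhiV_class)

lemma PhiV_conj:
  assumes W: "W \<in> carrier VB3" and L: "L \<in> carrier VB3" and s: "good s"
  shows "PhiV (conjg VB3 L W) s = PhiV (inv\<^bsub>VB3\<^esub> W) (PhiV L (PhiV W s))"
proof -
  have "conjg VB3 L W = inv\<^bsub>VB3\<^esub> W \<otimes>\<^bsub>VB3\<^esub> (L \<otimes>\<^bsub>VB3\<^esub> W)"
    using W L by (simp add: conjg_def VB.m_assoc)
  then show ?thesis using W L s by (simp add: PhiV_mult PhiV_good)
qed

lemma PhiV_basis: assumes i: "i \<in> basis_set" and g: "good (f, K3)"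
  shows "PhiV (basis_elt i) (f, K3) = (consr (i, False) f, K3)"
proof (cases i)
  case L13 then show ?thesis using g by (simp add: lam_classes PhiV_class)
next
  case L23 then show ?thesis using g by (simp add: lam_classes PhiV_class)
next
  case (L31 v)
  let ?W = "word_eval VB3 v1_val v"
  have gf: "reduced f" "lb f" using g by (auto simp: good_def)
  have bv: "L31 v \<in> basis_set" using i L31 by simp
  have g2: "good (consr (L31 v, False) f, K3)" using gf bv by (simp add: good_def)
  have gv: "good (foldr autv v f, K3)" using PhiV_good[OF v1_word_carrier g, of v] PhiV_v1_word[OF g] by simp
  have "PhiV (basis_elt i) (f, K3) = PhiV (inv\<^bsub>VB3\<^esub> ?W) (PhiV lam31 (foldr autv v f, K3))"
    using L31 PhiV_conj[OF v1_word_carrier lam_carrier(4) g] PhiV_v1_word[OF g] by simp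
  also have "\<dots> = PhiV (inv\<^bsub>VB3\<^esub> ?W) (foldr autv v (consr (L31 v, False) f), K3)"
    using PhiV_lam31[OF gv] conj31[OF bv gf] by simp
  also have "\<dots> = PhiV (inv\<^bsub>VB3\<^esub> ?W) (PhiV ?W (consr (L31 v, False) f, K3))"
    using PhiV_v1_word[OF g2] by simp
  also have "\<dots> = (consr (L31 v, False) f, K3)" by (rule PhiV_inv[OF v1_word_carrier g2])
  finally show ?thesis using L31 by simp
next
  case (L32 v)
  let ?W = "word_eval VB3 v1_val v"
  have gf: "reduced f" "lb f" using g by (auto simp: good_def)
  have bv: "L32 v \<in> basis_set" using i L32 by simp
  have g2: "good (consr (L32 v, False) f, K3)" using gf bv by (simp add: good_def)
  have gv: "good (foldr autv v f, K3)" using PhiV_good[OF v1_word_carrier g, of v] PhiV_v1_word[OF g] by simp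
  have "PhiV (basis_elt i) (f, K3) = PhiV (inv\<^bsub>VB3\<^esub> ?W) (PhiV lam32 (foldr autv v f, K3))"
    using L32 PhiV_conj[OF v1_word_carrier lam_carrier(6) g] PhiV_v1_word[OF g] by simp
  also have "\<dots> = PhiV (inv\<^bsub>VB3\<^esub> ?W) (foldr autv v (consr (L32 v, False) f), K3)"
    using PhiV_lam32[OF gv] conj32[OF bv gf] by simp
  also have "\<dots> = PhiV (inv\<^bsub>VB3\<^esub> ?W) (PhiV ?W (consr (L32 v, False) f, K3))"
    using PhiV_v1_word[OF g2] by simp
  also have "\<dots> = (consr (L32 v, False) f, K3)" by (rule PhiV_inv[OF v1_word_carrier g2])
  finally show ?thesis using L32 by simp
qed

lemma basis_carrier: "basis_elt i \<in> carrier VB3"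
  by (cases i) (simp_all add: conjg_def v1_word_carrier)

lemma PhiV_basis_letter: assumes i: "fst x \<in> basis_set" and g: "good (f, K3)"
  shows "PhiV (letter_eval VB3 basis_elt x) (f, K3) = (consr x f, K3)"
proof (cases "snd x")
  case False
  then show ?thesis using PhiV_basis[OF i g] by (cases x) (simp add: letter_eval_def)
next
  case True
  obtain j where x: "x = (j, True)" using True by (cases x) auto
  have gf: "reduced f" "lb f" using g by (auto simp: good_def)
  have g2: "good (consr (j, True) f, K3)" using gf i x by (simp add: good_def)
  have "f = consr (j, False) (consr (j, True) f)" using gf by simp
  then have "PhiV (inv\<^bsub>VB3\<^esub> (basis_elt j)) (f, K3) =
      PhiV (inv\<^bsub>VB3\<^esub> (basis_elt j)) (PhiV (basis_elt j) (consr (j, True) f, K3))"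
    using PhiV_basis[OF _ g2] i x by simp
  also have "\<dots> = (consr (j, True) f, K3)" by (rule PhiV_inv[OF basis_carrier g2])
  finally show ?thesis using x by (simp add: letter_eval_def)
qed

lemma basis_word_carrier: "word_eval VB3 basis_elt w \<in> carrier VB3"
  by (induction w) (auto simp: word_eval_def one_VB3 letter_eval_def basis_carrier)

lemma PhiV_basis_word: "fst ` set w \<subseteq> basis_set \<Longrightarrow> good (f, K3) \<Longrightarrow>
   PhiV (word_eval VB3 basis_elt w) (f, K3) = (app w f, K3)"
proof (induction w)
  case Nil then show ?case by (simp add: word_eval_def PhiV_one)
next
  case (Cons x w)
  have IH: "PhiV (word_eval VB3 basis_elt w) (f, K3) = (app w f, K3)" using Cons by simp
  have g: "good (app w f, K3)" using PhiV_good[OF basis_word_carrier Cons.prems(2), of w] IH by simp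
  have le: "letter_eval VB3 basis_elt x \<in> carrier VB3"
    by (simp add: letter_eval_def basis_carrier)
  have "PhiV (word_eval VB3 basis_elt (x # w)) (f, K3) =
      PhiV (letter_eval VB3 basis_elt x) (PhiV (word_eval VB3 basis_elt w) (f, K3))"
    by (simp add: word_eval_def PhiV_mult[OF le basis_word_carrier Cons.prems(2), unfolded word_eval_def])
  also have "\<dots> = (app (x # w) f, K3)" using IH PhiV_basis_letter[OF _ g] Cons.prems by simp
  finally show ?case .
qed


abbreviation vm (infixr "\<bullet>" 70) where "x \<bullet> y \<equiv> x \<otimes>\<^bsub>VB3\<^esub> y"
abbreviation vinv where "vinv x \<equiv> inv\<^bsub>VB3\<^esub> x"
abbreviation vone where "vone \<equiv> \<one>\<^bsub>VB3\<^esub>"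

lemma rel_eq: "p @ inv_word q \<in> vb3_relators \<Longrightarrow> vb3_eq p q"
proof -
  assume r: "p @ inv_word q \<in> vb3_relators"
  have 1: "vb3_eq (p @ inv_word q @ q) q" using vb3_eq.relator[OF r, of "[]" q] by simp
  have 2: "vb3_eq (p @ inv_word q @ q) p" using vb3_eq_ctx[OF inv_word_cancel, of p q "[]"] by simp
  show ?thesis using 1 2 by (metis vb3_eq.sym vb3_eq.trans)
qed

lemma gens_carrier[simp]: "sigma1 \<in> carrier VB3" "sigma2 \<in> carrier VB3" "rho1 \<in> carrier VB3" "rho2 \<in> carrier VB3"
  by (simp_all add: class_simps)

lemma rr1: "rho1 \<bullet> rho1 = vone"
  using vb3_eq.relator[of "[(R1, False), (R1, False)]" "[]" "[]"]
  by (simp add: class_simps one_VB3 vb3_class_eq vb3_relators_def)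

lemma rr2: "rho2 \<bullet> rho2 = vone"
  using vb3_eq.relator[of "[(R2, False), (R2, False)]" "[]" "[]"]
  by (simp add: class_simps one_VB3 vb3_class_eq vb3_relators_def)

lemma r121: "rho1 \<bullet> rho2 \<bullet> rho1 = rho2 \<bullet> rho1 \<bullet> rho2"
  using rel_eq[of "[(R1, False), (R2, False), (R1, False)]" "[(R2, False), (R1, False), (R2, False)]"]
  by (simp add: class_simps vb3_class_eq vb3_relators_def)

lemma s121: "sigma1 \<bullet> sigma2 \<bullet> sigma1 = sigma2 \<bullet> sigma1 \<bullet> sigma2"
  using rel_eq[of "[(S1, False), (S2, False), (S1, False)]" "[(S2, False), (S1, False), (S2, False)]"]
  by (simp add: class_simps vb3_class_eq vb3_relators_def)

lemma mix: "rho1 \<bullet> rho2 \<bullet> sigma1 = sigma2 \<bullet> rho1 \<bullet> rho2"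
  using rel_eq[of "[(R1, False), (R2, False), (S1, False)]" "[(S2, False), (R1, False), (R2, False)]"]
  by (simp add: class_simps vb3_class_eq vb3_relators_def)

lemma inv_rho1[simp]: "vinv rho1 = rho1"
  using rr1 VB.inv_equality by auto
lemma inv_rho2[simp]: "vinv rho2 = rho2"
  using rr2 VB.inv_equality by auto

lemma rr1_t[simp]: "x \<in> carrier VB3 \<Longrightarrow> rho1 \<bullet> rho1 \<bullet> x = x"
  by (simp add: VB.m_assoc[symmetric] rr1)
lemma rr2_t[simp]: "x \<in> carrier VB3 \<Longrightarrow> rho2 \<bullet> rho2 \<bullet> x = x"
  by (simp add: VB.m_assoc[symmetric] rr2)
lemma rr1_e[simp]: "rho1 \<bullet> rho1 = vone" by (rule rr1)
lemma rr2_e[simp]: "rho2 \<bullet> rho2 = vone" by (rule rr2)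
lemma r121_t[simp]: "x \<in> carrier VB3 \<Longrightarrow> rho1 \<bullet> rho2 \<bullet> rho1 \<bullet> x = rho2 \<bullet> rho1 \<bullet> rho2 \<bullet> x"
  using r121 by (simp add: VB.m_assoc[symmetric])
lemma r121_e[simp]: "rho1 \<bullet> rho2 \<bullet> rho1 = rho2 \<bullet> rho1 \<bullet> rho2" by (rule r121)

lemma inv_cancel_t[simp]: "a \<in> carrier VB3 \<Longrightarrow> x \<in> carrier VB3 \<Longrightarrow> a \<bullet> vinv a \<bullet> x = x"
  "a \<in> carrier VB3 \<Longrightarrow> x \<in> carrier VB3 \<Longrightarrow> vinv a \<bullet> a \<bullet> x = x"
  by (simp_all add: VB.m_assoc[symmetric])

lemmas VBsimps = VB.m_assoc VB.inv_mult_group VB.m_closed VB.inv_closed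

lemma t_eq: "sigma2 = rho1 \<bullet> rho2 \<bullet> sigma1 \<bullet> rho2 \<bullet> rho1"
proof -
  have "rho1 \<bullet> rho2 \<bullet> sigma1 \<bullet> rho2 \<bullet> rho1 = (rho1 \<bullet> rho2 \<bullet> sigma1) \<bullet> rho2 \<bullet> rho1"
    by (simp add: VB.m_assoc)
  also have "\<dots> = (sigma2 \<bullet> rho1 \<bullet> rho2) \<bullet> rho2 \<bullet> rho1" by (simp only: mix)
  also have "\<dots> = sigma2" by (simp add: VB.m_assoc)
  finally show ?thesis by simp
qed

lemma lam_defs:
  "lam12 = rho1 \<bullet> vinv sigma1"
  "lam21 = vinv sigma1 \<bullet> rho1"
  "lam23 = rho2 \<bullet> rho1 \<bullet> rho2 \<bullet> vinv sigma1 \<bullet> rho2 \<bullet> rho1"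
  "lam32 = rho1 \<bullet> rho2 \<bullet> vinv sigma1 \<bullet> rho2 \<bullet> rho1 \<bullet> rho2"
  "lam13 = rho2 \<bullet> rho1 \<bullet> vinv sigma1 \<bullet> rho2"
  "lam31 = rho2 \<bullet> vinv sigma1 \<bullet> rho1 \<bullet> rho2"
  by (simp_all add: lam12_def lam21_def lam23_def lam32_def lam13_def lam31_def t_eq[of] VBsimps)

lemma I1: "rho1 \<bullet> lam13 \<bullet> rho1 = lam23"
  by (simp add: lam_defs VBsimps)

lemma I2: "rho1 \<bullet> lam31 \<bullet> rho1 = lam32"
  by (simp add: lam_defs VBsimps)

lemma braid_inv:
  assumes "a \<in> carrier VB3" "b \<in> carrier VB3" "a \<bullet> b \<bullet> a = b \<bullet> a \<bullet> b"
  shows "vinv a \<bullet> vinv b \<bullet> vinv a = vinv b \<bullet> vinv a \<bullet> vinv b"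
proof -
  have "vinv (a \<bullet> b \<bullet> a) = vinv (b \<bullet> a \<bullet> b)" using assms(3) by simp
  then show ?thesis using assms(1,2) by (simp add: VB.inv_mult_group VB.m_assoc)
qed

lemma braid_conj:
  assumes "a \<in> carrier VB3" "b \<in> carrier VB3" "g \<in> carrier VB3" "a \<bullet> b \<bullet> a = b \<bullet> a \<bullet> b"
  shows "(g \<bullet> a \<bullet> vinv g) \<bullet> (g \<bullet> b \<bullet> vinv g) \<bullet> (g \<bullet> a \<bullet> vinv g) =
         (g \<bullet> b \<bullet> vinv g) \<bullet> (g \<bullet> a \<bullet> vinv g) \<bullet> (g \<bullet> b \<bullet> vinv g)"
proof -
  have "(g \<bullet> a \<bullet> vinv g) \<bullet> (g \<bullet> b \<bullet> vinv g) \<bullet> (g \<bullet> a \<bullet> vinv g) = g \<bullet> (a \<bullet> b \<bullet> a) \<bullet> vinv g"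
    using assms(1-3) by (simp add: VB.m_assoc)
  also have "\<dots> = g \<bullet> (b \<bullet> a \<bullet> b) \<bullet> vinv g" using assms(4) by simp
  also have "\<dots> = (g \<bullet> b \<bullet> vinv g) \<bullet> (g \<bullet> a \<bullet> vinv g) \<bullet> (g \<bullet> b \<bullet> vinv g)"
    using assms(1-3) by (simp add: VB.m_assoc)
  finally show ?thesis .
qed

lemma braidU: "(rho2 \<bullet> rho1 \<bullet> sigma1 \<bullet> rho1 \<bullet> rho2) \<bullet> sigma1 \<bullet> (rho2 \<bullet> rho1 \<bullet> sigma1 \<bullet> rho1 \<bullet> rho2)
   = sigma1 \<bullet> (rho2 \<bullet> rho1 \<bullet> sigma1 \<bullet> rho1 \<bullet> rho2) \<bullet> sigma1"
proof -
  have "(rho2 \<bullet> rho1 \<bullet> sigma1 \<bullet> rho1 \<bullet> rho2) \<bullet> sigma1 \<bullet> (rho2 \<bullet> rho1 \<bullet> sigma1 \<bullet> rho1 \<bullet> rho2)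
      = rho2 \<bullet> rho1 \<bullet> (sigma1 \<bullet> sigma2 \<bullet> sigma1) \<bullet> rho1 \<bullet> rho2"
    by (simp add: t_eq VB.m_assoc)
  also have "\<dots> = rho2 \<bullet> rho1 \<bullet> (sigma2 \<bullet> sigma1 \<bullet> sigma2) \<bullet> rho1 \<bullet> rho2" by (simp only: s121)
  also have "\<dots> = sigma1 \<bullet> (rho2 \<bullet> rho1 \<bullet> sigma1 \<bullet> rho1 \<bullet> rho2) \<bullet> sigma1"
    by (simp add: t_eq VB.m_assoc)
  finally show ?thesis .
qed

lemma braidTU: "(rho1 \<bullet> rho2 \<bullet> sigma1 \<bullet> rho2 \<bullet> rho1) \<bullet> (rho2 \<bullet> rho1 \<bullet> sigma1 \<bullet> rho1 \<bullet> rho2) \<bullet> (rho1 \<bullet> rho2 \<bullet> sigma1 \<bullet> rho2 \<bullet> rho1)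
   = (rho2 \<bullet> rho1 \<bullet> sigma1 \<bullet> rho1 \<bullet> rho2) \<bullet> (rho1 \<bullet> rho2 \<bullet> sigma1 \<bullet> rho2 \<bullet> rho1) \<bullet> (rho2 \<bullet> rho1 \<bullet> sigma1 \<bullet> rho1 \<bullet> rho2)"
proof -
  have "(rho1 \<bullet> rho2 \<bullet> sigma1 \<bullet> rho2 \<bullet> rho1) \<bullet> (rho2 \<bullet> rho1 \<bullet> sigma1 \<bullet> rho1 \<bullet> rho2) \<bullet> (rho1 \<bullet> rho2 \<bullet> sigma1 \<bullet> rho2 \<bullet> rho1)
      = rho1 \<bullet> rho2 \<bullet> (sigma1 \<bullet> sigma2 \<bullet> sigma1) \<bullet> rho2 \<bullet> rho1"
    by (simp add: t_eq VB.m_assoc)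
  also have "\<dots> = rho1 \<bullet> rho2 \<bullet> (sigma2 \<bullet> sigma1 \<bullet> sigma2) \<bullet> rho2 \<bullet> rho1" by (simp only: s121)
  also have "\<dots> = (rho2 \<bullet> rho1 \<bullet> sigma1 \<bullet> rho1 \<bullet> rho2) \<bullet> (rho1 \<bullet> rho2 \<bullet> sigma1 \<bullet> rho2 \<bullet> rho1) \<bullet> (rho2 \<bullet> rho1 \<bullet> sigma1 \<bullet> rho1 \<bullet> rho2)"
    by (simp add: t_eq VB.m_assoc)
  finally show ?thesis .
qed

lemma U_carrier[simp]: "(rho2 \<bullet> rho1 \<bullet> sigma1 \<bullet> rho1 \<bullet> rho2) \<in> carrier VB3" by simp

lemma BRa: "vinv sigma1 \<bullet> vinv (rho2 \<bullet> rho1 \<bullet> sigma1 \<bullet> rho1 \<bullet> rho2) \<bullet> vinv sigma1 = vinv (rho2 \<bullet> rho1 \<bullet> sigma1 \<bullet> rho1 \<bullet> rho2) \<bullet> vinv sigma1 \<bullet> vinv (rho2 \<bullet> rho1 \<bullet> sigma1 \<bullet> rho1 \<bullet> rho2)"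
  by (rule braid_inv[OF _ _ braidU[symmetric]]) simp_all

lemma BRb: "vinv (rho1 \<bullet> rho2 \<bullet> sigma1 \<bullet> rho2 \<bullet> rho1) \<bullet> vinv (rho2 \<bullet> rho1 \<bullet> sigma1 \<bullet> rho1 \<bullet> rho2) \<bullet> vinv (rho1 \<bullet> rho2 \<bullet> sigma1 \<bullet> rho2 \<bullet> rho1) = vinv (rho2 \<bullet> rho1 \<bullet> sigma1 \<bullet> rho1 \<bullet> rho2) \<bullet> vinv (rho1 \<bullet> rho2 \<bullet> sigma1 \<bullet> rho2 \<bullet> rho1) \<bullet> vinv (rho2 \<bullet> rho1 \<bullet> sigma1 \<bullet> rho1 \<bullet> rho2)"
  by (rule braid_inv[OF _ _ braidTU]) simp_all

lemma I3: "lam12 \<bullet> lam13 \<bullet> lam23 = lam23 \<bullet> lam13 \<bullet> lam12"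
proof -
  have E: "(rho1 \<bullet> vinv sigma1 \<bullet> vinv rho1) \<bullet> (rho1 \<bullet> vinv (rho2 \<bullet> rho1 \<bullet> sigma1 \<bullet> rho1 \<bullet> rho2) \<bullet> vinv rho1) \<bullet> (rho1 \<bullet> vinv sigma1 \<bullet> vinv rho1) = (rho1 \<bullet> vinv (rho2 \<bullet> rho1 \<bullet> sigma1 \<bullet> rho1 \<bullet> rho2) \<bullet> vinv rho1) \<bullet> (rho1 \<bullet> vinv sigma1 \<bullet> vinv rho1) \<bullet> (rho1 \<bullet> vinv (rho2 \<bullet> rho1 \<bullet> sigma1 \<bullet> rho1 \<bullet> rho2) \<bullet> vinv rho1)"
    by (rule braid_conj[OF _ _ _ BRa]) simp_all
  have "lam12 \<bullet> lam13 \<bullet> lam23 = ((rho1 \<bullet> vinv sigma1 \<bullet> vinv rho1) \<bullet> (rho1 \<bullet> vinv (rho2 \<bullet> rho1 \<bullet> sigma1 \<bullet> rho1 \<bullet> rho2) \<bullet> vinv rho1) \<bullet> (rho1 \<bullet> vinv sigma1 \<bullet> vinv rho1)) \<bullet> (rho1 \<bullet> rho2 \<bullet> rho1)"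
    by (simp add: lam_defs VBsimps)
  also have "\<dots> = ((rho1 \<bullet> vinv (rho2 \<bullet> rho1 \<bullet> sigma1 \<bullet> rho1 \<bullet> rho2) \<bullet> vinv rho1) \<bullet> (rho1 \<bullet> vinv sigma1 \<bullet> vinv rho1) \<bullet> (rho1 \<bullet> vinv (rho2 \<bullet> rho1 \<bullet> sigma1 \<bullet> rho1 \<bullet> rho2) \<bullet> vinv rho1)) \<bullet> (rho1 \<bullet> rho2 \<bullet> rho1)" by (simp only: E)
  also have "\<dots> = lam23 \<bullet> lam13 \<bullet> lam12" by (simp add: lam_defs VBsimps)
  finally show ?thesis .
qed

lemma I4: "lam13 \<bullet> lam12 \<bullet> lam32 = lam32 \<bullet> lam12 \<bullet> lam13"
proof -
  have "lam13 \<bullet> lam12 \<bullet> lam32 = (vinv (rho2 \<bullet> rho1 \<bullet> sigma1 \<bullet> rho1 \<bullet> rho2) \<bullet> vinv (rho1 \<bullet> rho2 \<bullet> sigma1 \<bullet> rho2 \<bullet> rho1) \<bullet> vinv (rho2 \<bullet> rho1 \<bullet> sigma1 \<bullet> rho1 \<bullet> rho2)) \<bullet> rho1"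
    by (simp add: lam_defs VBsimps)
  also have "\<dots> = (vinv (rho1 \<bullet> rho2 \<bullet> sigma1 \<bullet> rho2 \<bullet> rho1) \<bullet> vinv (rho2 \<bullet> rho1 \<bullet> sigma1 \<bullet> rho1 \<bullet> rho2) \<bullet> vinv (rho1 \<bullet> rho2 \<bullet> sigma1 \<bullet> rho2 \<bullet> rho1)) \<bullet> rho1" by (simp only: BRb)
  also have "\<dots> = lam32 \<bullet> lam12 \<bullet> lam13" by (simp add: lam_defs VBsimps)
  finally show ?thesis .
qed

lemma I5: "lam31 \<bullet> lam32 \<bullet> lam12 = lam12 \<bullet> lam32 \<bullet> lam31"
proof -
  have E: "(rho2 \<bullet> vinv sigma1 \<bullet> vinv rho2) \<bullet> (rho2 \<bullet> vinv (rho2 \<bullet> rho1 \<bullet> sigma1 \<bullet> rho1 \<bullet> rho2) \<bullet> vinv rho2) \<bullet> (rho2 \<bullet> vinv sigma1 \<bullet> vinv rho2) = (rho2 \<bullet> vinv (rho2 \<bullet> rho1 \<bullet> sigma1 \<bullet> rho1 \<bullet> rho2) \<bullet> vinv rho2) \<bullet> (rho2 \<bullet> vinv sigma1 \<bullet> vinv rho2) \<bullet> (rho2 \<bullet> vinv (rho2 \<bullet> rho1 \<bullet> sigma1 \<bullet> rho1 \<bullet> rho2) \<bullet> vinv rho2)"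
    by (rule braid_conj[OF _ _ _ BRa]) simp_all
  have "lam31 \<bullet> lam32 \<bullet> lam12 = ((rho2 \<bullet> vinv sigma1 \<bullet> vinv rho2) \<bullet> (rho2 \<bullet> vinv (rho2 \<bullet> rho1 \<bullet> sigma1 \<bullet> rho1 \<bullet> rho2) \<bullet> vinv rho2) \<bullet> (rho2 \<bullet> vinv sigma1 \<bullet> vinv rho2)) \<bullet> rho2"
    by (simp add: lam_defs VBsimps)
  also have "\<dots> = ((rho2 \<bullet> vinv (rho2 \<bullet> rho1 \<bullet> sigma1 \<bullet> rho1 \<bullet> rho2) \<bullet> vinv rho2) \<bullet> (rho2 \<bullet> vinv sigma1 \<bullet> vinv rho2) \<bullet> (rho2 \<bullet> vinv (rho2 \<bullet> rho1 \<bullet> sigma1 \<bullet> rho1 \<bullet> rho2) \<bullet> vinv rho2)) \<bullet> rho2" by (simp only: E)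
  also have "\<dots> = lam12 \<bullet> lam32 \<bullet> lam31" by (simp add: lam_defs VBsimps)
  finally show ?thesis .
qed


lemma VP3_mem: "vb3_class w \<in> VP3 \<longleftrightarrow> word_perm w = id"
proof
  assume "vb3_class w \<in> VP3"
  then obtain u where "vb3_class w = vb3_class u" "word_perm u = id" by (auto simp: VP3_def)
  then show "word_perm w = id" by (metis vb3_class_eq word_perm_eq)
qed (auto simp: VP3_def)

lemma VP3_carrier: "VP3 \<subseteq> carrier VB3"
  by (auto simp: VP3_def)

lemma word_perm_Nil: "word_perm [] = id" by (simp add: word_perm_def)

lemma word_perm_inv: "word_perm (inv_word w) \<circ> word_perm w = id"
  using word_perm_eq[OF inv_word_cancel[of w]] word_perm_append[of "inv_word w" w] by (simp add: word_perm_Nil)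

lemma VP3_subgroup: "subgroup VP3 VB3"
proof (rule VB.subgroupI)
  show "VP3 \<subseteq> carrier VB3" by (rule VP3_carrier)
  show "VP3 \<noteq> {}" using VP3_mem[of "[]"] by (auto simp: word_perm_def)
next
  fix a assume "a \<in> VP3"
  then obtain w where w: "a = vb3_class w" "word_perm w = id" by (auto simp: VP3_def)
  then have "word_perm (inv_word w) = id" using word_perm_inv[of w] by simp
  then show "vinv a \<in> VP3" using w by (simp add: VP3_mem)
next
  fix a b assume "a \<in> VP3" "b \<in> VP3"
  then obtain u w where "a = vb3_class u" "word_perm u = id" "b = vb3_class w" "word_perm w = id"
    by (auto simp: VP3_def)
  then show "a \<bullet> b \<in> VP3" by (simp add: VP3_mem word_perm_append)
qed

lemma group_VP3: "group VP3_grp"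
  unfolding VP3_grp_def by (rule subgroup.subgroup_is_group[OF VP3_subgroup group_VB3])

lemma lam_VP3[simp]: "lam12 \<in> VP3" "lam21 \<in> VP3" "lam13 \<in> VP3" "lam31 \<in> VP3" "lam23 \<in> VP3" "lam32 \<in> VP3"
  by (simp_all add: lam_classes VP3_mem word_perm_def transp_def fun_eq_iff)

lemma VP3_m[simp]: "a \<in> VP3 \<Longrightarrow> b \<in> VP3 \<Longrightarrow> a \<bullet> b \<in> VP3"
  using subgroup.m_closed[OF VP3_subgroup] by blast
lemma VP3_inv[simp]: "a \<in> VP3 \<Longrightarrow> vinv a \<in> VP3"
  using subgroup.m_inv_closed[OF VP3_subgroup] by blast
lemma VP3_one[simp]: "vone \<in> VP3"
  using subgroup.one_closed[OF VP3_subgroup] by blast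
lemma VP3_car[simp]: "a \<in> VP3 \<Longrightarrow> a \<in> carrier VB3"
  using VP3_carrier by blast

lemma v1_word_VP3: "word_eval VB3 v1_val v \<in> VP3"
proof (induction v)
  case Nil then show ?case by (simp add: word_eval_def)
next
  case (Cons x v)
  have "letter_eval VB3 v1_val x \<in> VP3"
    by (cases x; rename_tac g e; case_tac g) (simp_all add: letter_eval_def)
  then show ?case using Cons by (simp add: word_eval_def)
qed

lemma basis_VP3: "basis_elt i \<in> VP3"
  by (cases i) (simp_all add: conjg_def v1_word_VP3)

lemma v1_letter_carrier'[simp]: "letter_eval VB3 v1_val x \<in> carrier VB3"
  by (rule v1_letter_carrier)

lemma v1_eval_append: "word_eval VB3 v1_val (P @ Q) = word_eval VB3 v1_val P \<bullet> word_eval VB3 v1_val Q"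
  by (induction P) (simp_all add: word_eval_def VB.m_assoc v1_word_carrier[unfolded word_eval_def])

lemma v1_letter_inv: "letter_eval VB3 v1_val (g, \<not> e) = vinv (letter_eval VB3 v1_val (g, e))"
proof -
  have "v1_val g \<in> carrier VB3" by (cases g) simp_all
  then show ?thesis by (cases e) (simp_all add: letter_eval_def)
qed

lemma v1_eval_consr: "word_eval VB3 v1_val (consr x r) = word_eval VB3 v1_val (x # r)"
proof (cases r)
  case Nil then show ?thesis by simp
next
  case (Cons y r')
  show ?thesis
  proof (cases "fst y = fst x \<and> snd y \<noteq> snd x")
    case True
    then have y: "y = (fst x, \<not> snd x)" by (cases y) auto
    have "word_eval VB3 v1_val (x # r) = letter_eval VB3 v1_val x \<bullet> (vinv (letter_eval VB3 v1_val x) \<bullet> word_eval VB3 v1_val r')"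
      using Cons y v1_letter_inv[of "fst x" "snd x"] by (simp add: word_eval_def)
    also have "\<dots> = word_eval VB3 v1_val r'"
      by (simp add: v1_word_carrier)
    finally show ?thesis using Cons True by simp
  next
    case False then show ?thesis using Cons by (cases x; cases y) auto
  qed
qed

lemma v1_eval_nf: "word_eval VB3 v1_val (nf P) = word_eval VB3 v1_val P"
proof (induction P)
  case Nil then show ?case by simp
next
  case (Cons x P)
  have "word_eval VB3 v1_val (nf (x # P)) = word_eval VB3 v1_val (x # nf P)"
    by (simp add: nf_Cons v1_eval_consr)
  also have "\<dots> = word_eval VB3 v1_val (x # P)" using Cons by (simp add: word_eval_def)
  finally show ?case .
qed

lemma v1_eval_snoc: "word_eval VB3 v1_val (nf (v @ [x])) = word_eval VB3 v1_val v \<bullet> letter_eval VB3 v1_val x"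
  by (simp only: v1_eval_nf v1_eval_append) (simp add: word_eval_def v1_word_carrier)

abbreviation "l12 \<equiv> lam12"
abbreviation "l13 \<equiv> lam13"
abbreviation "l23 \<equiv> lam23"
abbreviation "l31 \<equiv> lam31"
abbreviation "l32 \<equiv> lam32"

lemma xa: "vinv l12 \<bullet> l13 \<bullet> l12 = (vinv l12 \<bullet> l32 \<bullet> l12) \<bullet> l13 \<bullet> vinv l32"
proof -
  have "(vinv l12 \<bullet> l32 \<bullet> l12) \<bullet> l13 \<bullet> vinv l32 = vinv l12 \<bullet> (l32 \<bullet> l12 \<bullet> l13) \<bullet> vinv l32"
    by (simp add: VB.m_assoc)
  also have "\<dots> = vinv l12 \<bullet> (l13 \<bullet> l12 \<bullet> l32) \<bullet> vinv l32" by (simp only: I4)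
  also have "\<dots> = vinv l12 \<bullet> l13 \<bullet> l12" by (simp add: VB.m_assoc)
  finally show ?thesis by simp
qed

lemma ya: "vinv l12 \<bullet> l23 \<bullet> l12 = l13 \<bullet> l23 \<bullet> vinv (vinv l12 \<bullet> l13 \<bullet> l12)"
proof -
  have "l13 \<bullet> l23 \<bullet> vinv (vinv l12 \<bullet> l13 \<bullet> l12) = vinv l12 \<bullet> (l12 \<bullet> l13 \<bullet> l23) \<bullet> vinv l12 \<bullet> vinv l13 \<bullet> l12"
    by (simp add: VB.m_assoc VB.inv_mult_group)
  also have "\<dots> = vinv l12 \<bullet> (l23 \<bullet> l13 \<bullet> l12) \<bullet> vinv l12 \<bullet> vinv l13 \<bullet> l12" by (simp only: I3)
  also have "\<dots> = vinv l12 \<bullet> l23 \<bullet> l12" by (simp add: VB.m_assoc)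
  finally show ?thesis by simp
qed

lemma za: "vinv l12 \<bullet> l31 \<bullet> l12 = l32 \<bullet> l31 \<bullet> vinv (vinv l12 \<bullet> l32 \<bullet> l12)"
proof -
  have "l32 \<bullet> l31 \<bullet> vinv (vinv l12 \<bullet> l32 \<bullet> l12) = vinv l12 \<bullet> (l12 \<bullet> l32 \<bullet> l31) \<bullet> vinv l12 \<bullet> vinv l32 \<bullet> l12"
    by (simp add: VB.m_assoc VB.inv_mult_group)
  also have "\<dots> = vinv l12 \<bullet> (l31 \<bullet> l32 \<bullet> l12) \<bullet> vinv l12 \<bullet> vinv l32 \<bullet> l12" by (simp only: I5)
  also have "\<dots> = vinv l12 \<bullet> l31 \<bullet> l12" by (simp add: VB.m_assoc)
  finally show ?thesis by simp
qed

lemma xai: "l12 \<bullet> l13 \<bullet> vinv l12 = vinv l32 \<bullet> l13 \<bullet> (l12 \<bullet> l32 \<bullet> vinv l12)"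
proof -
  have "vinv l32 \<bullet> l13 \<bullet> (l12 \<bullet> l32 \<bullet> vinv l12) = vinv l32 \<bullet> (l13 \<bullet> l12 \<bullet> l32) \<bullet> vinv l12"
    by (simp add: VB.m_assoc)
  also have "\<dots> = vinv l32 \<bullet> (l32 \<bullet> l12 \<bullet> l13) \<bullet> vinv l12" by (simp only: I4)
  also have "\<dots> = l12 \<bullet> l13 \<bullet> vinv l12" by (simp add: VB.m_assoc)
  finally show ?thesis by simp
qed

lemma yai: "l12 \<bullet> l23 \<bullet> vinv l12 = vinv (l12 \<bullet> l13 \<bullet> vinv l12) \<bullet> l23 \<bullet> l13"
proof -
  have "vinv (l12 \<bullet> l13 \<bullet> vinv l12) \<bullet> l23 \<bullet> l13 = l12 \<bullet> vinv l13 \<bullet> vinv l12 \<bullet> (l23 \<bullet> l13 \<bullet> l12) \<bullet> vinv l12"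
    by (simp add: VB.m_assoc VB.inv_mult_group)
  also have "\<dots> = l12 \<bullet> vinv l13 \<bullet> vinv l12 \<bullet> (l12 \<bullet> l13 \<bullet> l23) \<bullet> vinv l12" by (simp only: I3)
  also have "\<dots> = l12 \<bullet> l23 \<bullet> vinv l12" by (simp add: VB.m_assoc)
  finally show ?thesis by simp
qed

lemma zai: "l12 \<bullet> l31 \<bullet> vinv l12 = vinv (l12 \<bullet> l32 \<bullet> vinv l12) \<bullet> l31 \<bullet> l32"
proof -
  have "vinv (l12 \<bullet> l32 \<bullet> vinv l12) \<bullet> l31 \<bullet> l32 = l12 \<bullet> vinv l32 \<bullet> vinv l12 \<bullet> (l31 \<bullet> l32 \<bullet> l12) \<bullet> vinv l12"
    by (simp add: VB.m_assoc VB.inv_mult_group)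
  also have "\<dots> = l12 \<bullet> vinv l32 \<bullet> vinv l12 \<bullet> (l12 \<bullet> l32 \<bullet> l31) \<bullet> vinv l12" by (simp only: I5)
  also have "\<dots> = l12 \<bullet> l31 \<bullet> vinv l12" by (simp add: VB.m_assoc)
  finally show ?thesis by simp
qed

section \<open>The subgroup generated by the basis\<close>

definition Sb :: "vbgen word set set" where "Sb = basis_elt ` basis_set"
definition GH :: "vbgen word set set" where "GH = generate VB3 Sb"

lemma Sb_carrier: "Sb \<subseteq> carrier VB3"
  by (auto simp: Sb_def basis_carrier)

lemma GH_subgroup: "subgroup GH VB3"
  unfolding GH_def by (rule VB.generate_is_subgroup[OF Sb_carrier])

lemma GH_m[simp]: "a \<in> GH \<Longrightarrow> b \<in> GH \<Longrightarrow> a \<bullet> b \<in> GH"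
  using subgroup.m_closed[OF GH_subgroup] by blast
lemma GH_inv[simp]: "a \<in> GH \<Longrightarrow> vinv a \<in> GH"
  using subgroup.m_inv_closed[OF GH_subgroup] by blast
lemma GH_one[simp]: "vone \<in> GH"
  using subgroup.one_closed[OF GH_subgroup] by blast
lemma GH_car: "a \<in> GH \<Longrightarrow> a \<in> carrier VB3"
  using subgroup.subset[OF GH_subgroup] by blast

lemma basis_GH: "i \<in> basis_set \<Longrightarrow> basis_elt i \<in> GH"
  unfolding GH_def Sb_def by (rule generate.incl) blast

lemma conj_unfold: "a \<in> carrier VB3 \<Longrightarrow> b \<in> carrier VB3 \<Longrightarrow> conjg VB3 a b = vinv b \<bullet> a \<bullet> b"
  by (simp add: conjg_def VB.m_assoc)

lemma l13_GH[simp]: "l13 \<in> GH" using basis_GH[of L13] by simp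
lemma l23_GH[simp]: "l23 \<in> GH" using basis_GH[of L23] by simp
lemma l31_GH[simp]: "l31 \<in> GH" using basis_GH[of "L31 []"] by (simp add: conj_unfold word_eval_def)
lemma l32_GH[simp]: "l32 \<in> GH" using basis_GH[of "L32 []"] by (simp add: conj_unfold word_eval_def)
lemma ta_GH[simp]: "vinv l12 \<bullet> l32 \<bullet> l12 \<in> GH"
  using basis_GH[of "L32 [(G12, False)]"] by (simp add: conj_unfold word_eval_def letter_eval_def)
lemma tai_GH[simp]: "l12 \<bullet> l32 \<bullet> vinv l12 \<in> GH"
  using basis_GH[of "L32 [(G12, True)]"] by (simp add: conj_unfold word_eval_def letter_eval_def VB.m_assoc)

lemma conj_closure:
  assumes g: "g \<in> carrier VB3" and S: "\<And>x. x \<in> Sb \<Longrightarrow> g \<bullet> x \<bullet> vinv g \<in> GH" and h: "h \<in> GH"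
  shows "g \<bullet> h \<bullet> vinv g \<in> GH"
  using h[unfolded GH_def]
proof (induction rule: generate.induct)
  case one then show ?case using g by simp
next
  case (incl h) then show ?case using S by blast
next
  case (inv h)
  have hc: "h \<in> carrier VB3" using inv Sb_carrier by blast
  have "g \<bullet> vinv h \<bullet> vinv g = vinv (g \<bullet> h \<bullet> vinv g)" using g hc by (simp add: VB.inv_mult_group VB.m_assoc)
  then show ?case using S[OF inv] by simp
next
  case (eng h1 h2)
  have c: "h1 \<in> carrier VB3" "h2 \<in> carrier VB3"
    using eng.hyps VB.generate_in_carrier[OF Sb_carrier] by auto
  have "g \<bullet> (h1 \<bullet> h2) \<bullet> vinv g = (g \<bullet> h1 \<bullet> vinv g) \<bullet> (g \<bullet> h2 \<bullet> vinv g)"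
    using g c by (simp add: VB.m_assoc)
  then show ?case using eng.IH by simp
qed

lemma B31a: assumes "L31 v \<in> basis_set" "v \<noteq> []" shows "L31 (nf (v @ [(G12, e)])) \<in> basis_set"
proof -
  have v: "reduced v" "fst (hd v) = G21" using assms by auto
  have ne: "nf (v @ [(G12, e)]) \<noteq> []"
  proof
    assume "nf (v @ [(G12, e)]) = []"
    then have "v = [(G12, \<not> e)]" using nf_snoc_Nil[of v "(G12, e)"] v by (simp add: invl_def)
    then show False using v by auto
  qed
  have "hd (nf (v @ [(G12, e)])) = hd v" by (rule hd_nf_snoc) (use v assms(2) ne in auto)
  then show ?thesis using v ne by simp
qed

lemma B32a: assumes "L32 u \<in> basis_set" shows "L32 (nf (u @ [(G12, e)])) \<in> basis_set"
proof -
  have u: "reduced u" "u = [] \<or> fst (hd u) = G12" using assms by auto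
  show ?thesis
  proof (cases "u = [] \<or> nf (u @ [(G12, e)]) = []")
    case True then show ?thesis by auto
  next
    case False
    have "hd (nf (u @ [(G12, e)])) = hd u" by (rule hd_nf_snoc) (use u False in auto)
    then show ?thesis using u False by simp
  qed
qed

lemma basis_conj_shift:
  assumes "x \<in> carrier VB3" "l0 \<in> carrier VB3"
  shows "vinv x \<bullet> conjg VB3 l0 (word_eval VB3 v1_val v) \<bullet> x = conjg VB3 l0 (word_eval VB3 v1_val v \<bullet> x)"
  using assms by (simp add: conj_unfold VB.m_assoc VB.inv_mult_group v1_word_carrier)

lemma cA: assumes "x \<in> Sb" shows "vinv l12 \<bullet> x \<bullet> l12 \<in> GH"
proof -
  obtain i where i: "i \<in> basis_set" "x = basis_elt i" using assms by (auto simp: Sb_def)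
  show ?thesis
  proof (cases i)
    case L13 then show ?thesis using i by (simp add: xa)
  next
    case L23 then show ?thesis using i by (simp add: ya xa)
  next
    case (L31 v)
    show ?thesis
    proof (cases "v = []")
      case True then show ?thesis using i L31 by (simp add: conj_unfold word_eval_def za)
    next
      case False
      have eq: "vinv l12 \<bullet> x \<bullet> l12 = basis_elt (L31 (nf (v @ [(G12, False)])))"
        using i L31 basis_conj_shift[of l12 l31 v, simplified] by (simp add: v1_eval_snoc letter_eval_def)
      have m: "L31 (nf (v @ [(G12, False)])) \<in> basis_set" using B31a i L31 False by simp
      show ?thesis unfolding eq by (rule basis_GH[OF m])
    qed
  next
    case (L32 u)
    have eq: "vinv l12 \<bullet> x \<bullet> l12 = basis_elt (L32 (nf (u @ [(G12, False)])))"
      using i L32 basis_conj_shift[of l12 l32 u, simplified] by (simp add: v1_eval_snoc letter_eval_def)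
    have m: "L32 (nf (u @ [(G12, False)])) \<in> basis_set" using B32a i L32 by simp
    show ?thesis unfolding eq by (rule basis_GH[OF m])
  qed
qed

lemma cB: assumes "x \<in> Sb" shows "l12 \<bullet> x \<bullet> vinv l12 \<in> GH"
proof -
  obtain i where i: "i \<in> basis_set" "x = basis_elt i" using assms by (auto simp: Sb_def)
  show ?thesis
  proof (cases i)
    case L13 then show ?thesis using i by (simp add: xai)
  next
    case L23 then show ?thesis using i by (simp add: yai xai)
  next
    case (L31 v)
    show ?thesis
    proof (cases "v = []")
      case True then show ?thesis using i L31 by (simp add: conj_unfold word_eval_def zai)
    next
      case False
      have eq: "l12 \<bullet> x \<bullet> vinv l12 = basis_elt (L31 (nf (v @ [(G12, True)])))"
        using i L31 basis_conj_shift[of "vinv l12" l31 v, simplified] by (simp add: v1_eval_snoc letter_eval_def)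
      have m: "L31 (nf (v @ [(G12, True)])) \<in> basis_set" using B31a i L31 False by simp
      show ?thesis unfolding eq by (rule basis_GH[OF m])
    qed
  next
    case (L32 u)
    have eq: "l12 \<bullet> x \<bullet> vinv l12 = basis_elt (L32 (nf (u @ [(G12, True)])))"
      using i L32 basis_conj_shift[of "vinv l12" l32 u, simplified] by (simp add: v1_eval_snoc letter_eval_def)
    have m: "L32 (nf (u @ [(G12, True)])) \<in> basis_set" using B32a i L32 by simp
    show ?thesis unfolding eq by (rule basis_GH[OF m])
  qed
qed

lemma rho_conj_mult: "a \<in> carrier VB3 \<Longrightarrow> b \<in> carrier VB3 \<Longrightarrow>
   rho1 \<bullet> (a \<bullet> b) \<bullet> rho1 = (rho1 \<bullet> a \<bullet> rho1) \<bullet> (rho1 \<bullet> b \<bullet> rho1)"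
  by (simp add: VB.m_assoc)

lemma rho_conj_inv: "a \<in> carrier VB3 \<Longrightarrow> rho1 \<bullet> vinv a \<bullet> rho1 = vinv (rho1 \<bullet> a \<bullet> rho1)"
  by (simp add: VB.m_assoc VB.inv_mult_group)

lemma rho_l12: "rho1 \<bullet> l12 \<bullet> rho1 = lam21" by (simp add: lam_defs VB.m_assoc)
lemma rho_l21: "rho1 \<bullet> lam21 \<bullet> rho1 = l12" by (simp add: lam_defs VB.m_assoc)
lemma rho_l23: "rho1 \<bullet> l23 \<bullet> rho1 = l13" by (simp add: I1[symmetric] VB.m_assoc)
lemma rho_l32: "rho1 \<bullet> l32 \<bullet> rho1 = l31" by (simp add: I2[symmetric] VB.m_assoc)

lemma rho_letter: "rho1 \<bullet> letter_eval VB3 v1_val x \<bullet> rho1 = letter_eval VB3 v1_val (sw (fst x), snd x)"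
  by (cases x; rename_tac g e; case_tac g; case_tac e)
     (simp_all add: letter_eval_def rho_conj_inv rho_l12 rho_l21)

lemma rho_word: "rho1 \<bullet> word_eval VB3 v1_val v \<bullet> rho1 = word_eval VB3 v1_val (swapv v)"
proof (induction v)
  case Nil then show ?case by (simp add: word_eval_def)
next
  case (Cons x v)
  have "rho1 \<bullet> word_eval VB3 v1_val (x # v) \<bullet> rho1 =
    (rho1 \<bullet> letter_eval VB3 v1_val x \<bullet> rho1) \<bullet> (rho1 \<bullet> word_eval VB3 v1_val v \<bullet> rho1)"
    using rho_conj_mult[OF v1_letter_carrier v1_word_carrier, of x v] by (simp add: word_eval_def)
  also have "\<dots> = word_eval VB3 v1_val (swapv (x # v))"
    using Cons by (simp add: rho_letter word_eval_def)
  finally show ?case .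
qed

lemma rho_conjg: "l \<in> carrier VB3 \<Longrightarrow> W \<in> carrier VB3 \<Longrightarrow>
   rho1 \<bullet> conjg VB3 l W \<bullet> rho1 = conjg VB3 (rho1 \<bullet> l \<bullet> rho1) (rho1 \<bullet> W \<bullet> rho1)"
  by (simp add: conj_unfold VB.m_assoc VB.inv_mult_group)

lemma cR: assumes "x \<in> Sb" shows "rho1 \<bullet> x \<bullet> rho1 \<in> GH"
proof -
  obtain i where i: "i \<in> basis_set" "x = basis_elt i" using assms by (auto simp: Sb_def)
  show ?thesis
  proof (cases i)
    case L13 then show ?thesis using i by (simp add: I1)
  next
    case L23 then show ?thesis using i by (simp add: rho_l23)
  next
    case (L31 v)
    have eq: "rho1 \<bullet> x \<bullet> rho1 = basis_elt (L32 (swapv v))"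
      using i L31 rho_conjg[OF lam_carrier(4) v1_word_carrier, of v] by (simp add: I2 rho_word)
    have m: "L32 (swapv v) \<in> basis_set" using i L31 by (cases "v = []") (auto simp: hd_swapv)
    show ?thesis unfolding eq by (rule basis_GH[OF m])
  next
    case (L32 v)
    have eq: "rho1 \<bullet> x \<bullet> rho1 = basis_elt (L31 (swapv v))"
      using i L32 rho_conjg[OF lam_carrier(6) v1_word_carrier, of v] by (simp add: rho_l32 rho_word)
    have m: "L31 (swapv v) \<in> basis_set" using i L32 by (cases "v = []") (auto simp: hd_swapv)
    show ?thesis unfolding eq by (rule basis_GH[OF m])
  qed
qed

definition Nz :: "vbgen word set set" where
  "Nz = {g \<in> carrier VB3. (\<forall>h\<in>GH. g \<bullet> h \<bullet> vinv g \<in> GH) \<and> (\<forall>h\<in>GH. vinv g \<bullet> h \<bullet> g \<in> GH)}"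

lemma Nz_mult: assumes "a \<in> Nz" "b \<in> Nz" shows "a \<bullet> b \<in> Nz"
proof -
  have c: "a \<in> carrier VB3" "b \<in> carrier VB3" using assms by (auto simp: Nz_def)
  have "(a \<bullet> b) \<bullet> h \<bullet> vinv (a \<bullet> b) \<in> GH" if h: "h \<in> GH" for h
  proof -
    have "(a \<bullet> b) \<bullet> h \<bullet> vinv (a \<bullet> b) = a \<bullet> (b \<bullet> h \<bullet> vinv b) \<bullet> vinv a"
      using c GH_car[OF h] by (simp add: VB.m_assoc VB.inv_mult_group)
    then show ?thesis using assms h by (auto simp: Nz_def)
  qed
  moreover have "vinv (a \<bullet> b) \<bullet> h \<bullet> (a \<bullet> b) \<in> GH" if h: "h \<in> GH" for h
  proof -
    have "vinv (a \<bullet> b) \<bullet> h \<bullet> (a \<bullet> b) = vinv b \<bullet> (vinv a \<bullet> h \<bullet> a) \<bullet> b"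
      using c GH_car[OF h] by (simp add: VB.m_assoc VB.inv_mult_group)
    then show ?thesis using assms h by (auto simp: Nz_def)
  qed
  ultimately show ?thesis using c by (simp add: Nz_def)
qed

lemma Nz_inv: assumes "a \<in> Nz" shows "vinv a \<in> Nz"
  using assms by (auto simp: Nz_def)

lemma GH_Nz: assumes "a \<in> GH" shows "a \<in> Nz"
  using assms GH_car[OF assms] by (auto simp: Nz_def)

lemma rho1_Nz: "rho1 \<in> Nz"
proof -
  have "rho1 \<bullet> h \<bullet> vinv rho1 \<in> GH" if "h \<in> GH" for h
  proof -
    have "rho1 \<bullet> x \<bullet> vinv rho1 \<in> GH" if "x \<in> Sb" for x using cR[OF that] by simp
    from conj_closure[OF _ this \<open>h \<in> GH\<close>] show ?thesis by simp
  qed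
  then show ?thesis by (simp add: Nz_def)
qed

lemma l12_Nz: "l12 \<in> Nz"
proof -
  have "l12 \<bullet> h \<bullet> vinv l12 \<in> GH" if "h \<in> GH" for h
    by (rule conj_closure[OF _ cB that]) simp_all
  moreover have "vinv l12 \<bullet> h \<bullet> l12 \<in> GH" if "h \<in> GH" for h
  proof -
    have "vinv l12 \<bullet> x \<bullet> vinv (vinv l12) \<in> GH" if "x \<in> Sb" for x using cA[OF that] by simp
    from conj_closure[of "vinv l12", OF _ this \<open>h \<in> GH\<close>] show ?thesis by simp
  qed
  ultimately show ?thesis by (simp add: Nz_def)
qed

lemma sigma1_Nz: "sigma1 \<in> Nz"
proof -
  have "sigma1 = vinv l12 \<bullet> rho1" by (simp add: lam_defs VB.inv_mult_group VB.m_assoc)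
  then show ?thesis using Nz_mult[OF Nz_inv[OF l12_Nz] rho1_Nz] by simp
qed


section \<open>Normality via the action on the three blocks\<close>

definition cb :: "nat \<Rightarrow> vbgen word set" where
  "cb k = (if k = 3 then vone else if k = 2 then rho2 else rho1 \<bullet> rho2)"

lemma cb_carrier[simp]: "cb k \<in> carrier VB3" by (simp add: cb_def)

lemma l_Nz[simp]: "vinv l13 \<in> Nz" "vinv l23 \<in> Nz" "vinv l31 \<in> Nz" "vinv l32 \<in> Nz" "vone \<in> Nz"
  by (simp_all add: GH_Nz)

lemma step_pos: assumes k: "k \<in> {1, 2, 3}"
  shows "\<exists>n\<in>Nz. vb3_class [(g, False)] \<bullet> cb k = cb (gen_perm g k) \<bullet> n"
proof -
  have s1: "sigma1 = vb3_class [(S1, False)]" and s2: "sigma2 = vb3_class [(S2, False)]"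
    and r1: "rho1 = vb3_class [(R1, False)]" and r2: "rho2 = vb3_class [(R2, False)]"
    by (simp_all add: class_simps)
  show ?thesis
  proof (cases g)
    case R1
    show ?thesis
    proof (cases "k = 3")
      case True then show ?thesis using R1 rho1_Nz
        by (intro bexI[of _ rho1]) (simp_all add: cb_def transp_def r1[symmetric])
    next
      case False
      then show ?thesis using R1 k
        by (intro bexI[of _ vone]) (auto simp: cb_def transp_def r1[symmetric] VB.m_assoc)
    qed
  next
    case R2
    show ?thesis
    proof (cases "k = 1")
      case True then show ?thesis using R2 rho1_Nz
        by (intro bexI[of _ rho1]) (simp_all add: cb_def transp_def r2[symmetric] VB.m_assoc)
    next
      case False
      then show ?thesis using R2 k
        by (intro bexI[of _ vone]) (auto simp: cb_def transp_def r2[symmetric] VB.m_assoc)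
    qed
  next
    case S1
    consider "k = 3" | "k = 2" | "k = 1" using k by auto
    then show ?thesis
    proof cases
      case 1 then show ?thesis using S1 sigma1_Nz
        by (intro bexI[of _ sigma1]) (simp_all add: cb_def transp_def s1[symmetric])
    next
      case 2 then show ?thesis using S1
        by (intro bexI[of _ "vinv l31"]) (simp add: cb_def transp_def s1[symmetric] lam_defs VB.m_assoc VB.inv_mult_group, simp)
    next
      case 3 then show ?thesis using S1
        by (intro bexI[of _ "vinv l13"]) (simp add: cb_def transp_def s1[symmetric] lam_defs VB.m_assoc VB.inv_mult_group, simp)
    qed
  next
    case S2
    consider "k = 3" | "k = 2" | "k = 1" using k by auto
    then show ?thesis
    proof cases
      case 1 then show ?thesis using S2
        by (intro bexI[of _ "vinv l32"]) (simp add: cb_def transp_def s2[symmetric] lam_defs VB.m_assoc VB.inv_mult_group t_eq, simp)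
    next
      case 2 then show ?thesis using S2
        by (intro bexI[of _ "vinv l23"]) (simp add: cb_def transp_def s2[symmetric] lam_defs VB.m_assoc VB.inv_mult_group t_eq, simp)
    next
      case 3 then show ?thesis using S2 sigma1_Nz
        by (intro bexI[of _ sigma1]) (simp_all add: cb_def transp_def s2[symmetric] VB.m_assoc t_eq)
    qed
  qed
qed

lemma gen_perm_range: "k \<in> {1, 2, 3} \<Longrightarrow> gen_perm g k \<in> {1, 2, 3}"
  by (cases g) (auto simp: transp_def)

lemma gen_perm_invol': "gen_perm g (gen_perm g k) = k"
  using gen_perm_invol[of g] by (metis comp_apply id_apply)

lemma solve_conj:
  assumes c: "A \<in> carrier VB3" "c1 \<in> carrier VB3" "c \<in> carrier VB3" "n \<in> carrier VB3"
    and e: "A \<bullet> c1 = c \<bullet> n"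
  shows "vinv A \<bullet> c = c1 \<bullet> vinv n"
proof -
  have "vinv A \<bullet> c = vinv A \<bullet> (c \<bullet> n) \<bullet> vinv n" using c by (simp add: VB.m_assoc)
  also have "\<dots> = vinv A \<bullet> (A \<bullet> c1) \<bullet> vinv n" by (simp only: e)
  also have "\<dots> = c1 \<bullet> vinv n" using c by (simp add: VB.m_assoc[symmetric])
  finally show ?thesis .
qed

lemma step: assumes k: "k \<in> {1, 2, 3}"
  shows "\<exists>n\<in>Nz. vb3_class [x] \<bullet> cb k = cb (gen_perm (fst x) k) \<bullet> n"
proof -
  obtain g e where x: "x = (g, e)" by (cases x)
  show ?thesis
  proof (cases e)
    case False then show ?thesis using step_pos[OF k] x by simp
  next
    case True
    let ?k1 = "gen_perm g k"
    obtain n where n: "n \<in> Nz" "vb3_class [(g, False)] \<bullet> cb ?k1 = cb (gen_perm g ?k1) \<bullet> n"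
      using step_pos[OF gen_perm_range[OF k]] by blast
    have nc: "n \<in> carrier VB3" using n by (simp add: Nz_def)
    have e: "vb3_class [(g, False)] \<bullet> cb ?k1 = cb k \<bullet> n" using n by (simp add: gen_perm_invol')
    have A: "vb3_class [(g, True)] = vinv (vb3_class [(g, False)])" by simp
    have "vinv (vb3_class [(g, False)]) \<bullet> cb k = cb ?k1 \<bullet> vinv n"
      by (rule solve_conj[OF _ _ _ nc e]) simp_all
    then have "vb3_class [(g, True)] \<bullet> cb k = cb ?k1 \<bullet> vinv n" using A by (simp del: inv_class)
    then show ?thesis using x True Nz_inv[OF n(1)] by auto
  qed
qed

lemma word_perm_range: "k \<in> {1, 2, 3} \<Longrightarrow> word_perm w k \<in> {1, 2, 3}"
proof (induction w)
  case Nil then show ?case by (simp add: word_perm_Nil)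
next
  case (Cons x w)
  show ?case using gen_perm_range[OF Cons.IH[OF Cons.prems], of "fst x"] by (simp add: word_perm_Cons)
qed

lemma block_conj: "k \<in> {1, 2, 3} \<Longrightarrow> h \<in> GH \<Longrightarrow>
  \<exists>h'\<in>GH. vb3_class w \<bullet> (cb k \<bullet> h \<bullet> vinv (cb k)) \<bullet> vinv (vb3_class w) =
     cb (word_perm w k) \<bullet> h' \<bullet> vinv (cb (word_perm w k))"
proof (induction w)
  case Nil then show ?case by (auto simp: word_perm_Nil one_VB3[symmetric] GH_car)
next
  case (Cons x w)
  obtain h' where h': "h' \<in> GH" "vb3_class w \<bullet> (cb k \<bullet> h \<bullet> vinv (cb k)) \<bullet> vinv (vb3_class w) =
     cb (word_perm w k) \<bullet> h' \<bullet> vinv (cb (word_perm w k))" using Cons by blast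
  let ?k' = "word_perm w k"
  obtain n where n: "n \<in> Nz" "vb3_class [x] \<bullet> cb ?k' = cb (gen_perm (fst x) ?k') \<bullet> n"
    using step[OF word_perm_range[OF Cons.prems(1)]] by blast
  have nc: "n \<in> carrier VB3" using n by (simp add: Nz_def)
  have hc: "h \<in> carrier VB3" "h' \<in> carrier VB3" using Cons.prems h' GH_car by auto
  have cls: "vb3_class (x # w) = vb3_class [x] \<bullet> vb3_class w" by simp
  have "vb3_class (x # w) \<bullet> (cb k \<bullet> h \<bullet> vinv (cb k)) \<bullet> vinv (vb3_class (x # w)) =
     vb3_class [x] \<bullet> (vb3_class w \<bullet> (cb k \<bullet> h \<bullet> vinv (cb k)) \<bullet> vinv (vb3_class w)) \<bullet> vinv (vb3_class [x])"
    unfolding cls using hc by (simp add: VB.m_assoc VB.inv_mult_group del: mult_class inv_class)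
  also have "\<dots> = (vb3_class [x] \<bullet> cb ?k') \<bullet> h' \<bullet> vinv (vb3_class [x] \<bullet> cb ?k')"
    using h'(2) hc by (simp add: VB.m_assoc VB.inv_mult_group del: mult_class inv_class)
  also have "\<dots> = cb (gen_perm (fst x) ?k') \<bullet> (n \<bullet> h' \<bullet> vinv n) \<bullet> vinv (cb (gen_perm (fst x) ?k'))"
    unfolding n(2) using hc nc by (simp add: VB.m_assoc VB.inv_mult_group)
  finally show ?case using n h' by (auto simp: Nz_def word_perm_Cons)
qed

lemma GH_normal_VB: "g \<in> VP3 \<Longrightarrow> h \<in> GH \<Longrightarrow> g \<bullet> h \<bullet> vinv g \<in> GH"
proof -
  assume g: "g \<in> VP3" and h: "h \<in> GH"
  obtain w where w: "g = vb3_class w" "word_perm w = id" using g by (auto simp: VP3_def)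
  obtain h' where "h' \<in> GH" "g \<bullet> (cb 3 \<bullet> h \<bullet> vinv (cb 3)) \<bullet> vinv g = cb 3 \<bullet> h' \<bullet> vinv (cb 3)"
    using block_conj[of 3 h w] h w by auto
  then show ?thesis using h GH_car by (simp add: cb_def)
qed

lemma Sb_VP3: "Sb \<subseteq> VP3"
  by (auto simp: Sb_def basis_VP3)

lemma carrier_VP3_grp[simp]: "carrier VP3_grp = VP3" by (simp add: VP3_grp_def)
lemma mult_VP3_grp[simp]: "x \<otimes>\<^bsub>VP3_grp\<^esub> y = x \<bullet> y" by (simp add: VP3_grp_def)
lemma one_VP3_grp[simp]: "\<one>\<^bsub>VP3_grp\<^esub> = vone" by (simp add: VP3_grp_def)
lemma inv_VP3_grp[simp]: "x \<in> VP3 \<Longrightarrow> inv\<^bsub>VP3_grp\<^esub> x = vinv x"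
  unfolding VP3_grp_def by (rule VB.m_inv_consistent[OF VP3_subgroup])

lemma gen_eq: "generate VP3_grp Sb = GH"
  unfolding VP3_grp_def GH_def by (rule VB.generate_consistent[OF Sb_VP3 VP3_subgroup])

lemma GH_normal: "GH \<lhd> VP3_grp"
proof -
  interpret P: group VP3_grp by (rule group_VP3)
  have sg: "subgroup GH VP3_grp"
    using P.generate_is_subgroup[of Sb] Sb_VP3 gen_eq by simp
  show ?thesis unfolding P.normal_inv_iff
  proof (intro conjI sg ballI)
    fix x h assume "x \<in> carrier VP3_grp" "h \<in> GH"
    then show "x \<otimes>\<^bsub>VP3_grp\<^esub> h \<otimes>\<^bsub>VP3_grp\<^esub> inv\<^bsub>VP3_grp\<^esub> x \<in> GH"
      using GH_normal_VB[of x h] GH_car by (simp add: VB.m_assoc)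
  qed
qed

lemma V2_sub: "V2 \<subseteq> GH"
proof -
  interpret P: group VP3_grp by (rule group_VP3)
  have sg: "subgroup GH VP3_grp"
    using P.generate_is_subgroup[of Sb] Sb_VP3 gen_eq by simp
  show ?thesis unfolding V2_def
    by (rule P.generate_subgroup_incl[OF _ sg]) simp
qed

lemma GH_sub_N: assumes N: "N \<lhd> VP3_grp" "V2 \<subseteq> N" shows "GH \<subseteq> N"
proof -
  interpret P: group VP3_grp by (rule group_VP3)
  have Nn: "subgroup N VP3_grp" "\<forall>x\<in>VP3. \<forall>h\<in>N. (x \<bullet> h) \<bullet> vinv x \<in> N"
    using N(1) unfolding P.normal_inv_iff by auto
  have inV2: "l13 \<in> N" "l23 \<in> N" "l31 \<in> N" "l32 \<in> N"
    using N(2) unfolding V2_def by (auto intro: generate.incl)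
  have conjN: "conjg VB3 l (word_eval VB3 v1_val v) \<in> N" if l: "l \<in> N" "l \<in> VP3" for l v
  proof -
    let ?W = "word_eval VB3 v1_val v"
    have W: "?W \<in> VP3" by (rule v1_word_VP3)
    have "(vinv ?W \<bullet> l) \<bullet> vinv (vinv ?W) \<in> N" using Nn(2) W l VP3_inv by blast
    then show ?thesis using W l by (simp add: conjg_def)
  qed
  have "Sb \<subseteq> N"
  proof
    fix x assume "x \<in> Sb"
    then obtain i where "x = basis_elt i" by (auto simp: Sb_def)
    then show "x \<in> N" using inV2 conjN by (cases i) auto
  qed
  then have "generate VP3_grp Sb \<subseteq> N" by (rule P.generate_subgroup_incl[OF _ Nn(1)])
  then show ?thesis using gen_eq by simp
qed

lemma word_eval_VP3: "fst ` set w \<subseteq> basis_set \<Longrightarrow> word_eval VP3_grp basis_elt w = word_eval VB3 basis_elt w"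
proof (induction w)
  case Nil then show ?case by (simp add: word_eval_def)
next
  case (Cons x w)
  have "letter_eval VP3_grp basis_elt x = letter_eval VB3 basis_elt x"
    by (simp add: letter_eval_def basis_VP3)
  then show ?case using Cons by (simp add: word_eval_def)
qed

theorem lemma3:
  shows "generate VP3_grp (basis_elt ` basis_set) = V2star
         \<and> free_family VP3_grp basis_elt basis_set"
proof
  show "generate VP3_grp (basis_elt ` basis_set) = V2star"
  proof
    show "generate VP3_grp (basis_elt ` basis_set) \<subseteq> V2star"
      unfolding V2star_def normal_closure_def using GH_sub_N gen_eq Sb_def by auto
    show "V2star \<subseteq> generate VP3_grp (basis_elt ` basis_set)"
      unfolding V2star_def normal_closure_def using GH_normal V2_sub gen_eq Sb_def by auto
  qed
next
  have g0: "good ([], K3)" by (simp add: good_def)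
  show "free_family VP3_grp basis_elt basis_set"
    unfolding free_family_def
  proof (intro conjI allI impI)
    show "inj_on basis_elt basis_set"
    proof (rule inj_onI)
      fix i j assume ij: "i \<in> basis_set" "j \<in> basis_set" "basis_elt i = basis_elt j"
      then have "PhiV (basis_elt i) ([], K3) = PhiV (basis_elt j) ([], K3)" by simp
      then show "i = j" using PhiV_basis[OF ij(1) g0] PhiV_basis[OF ij(2) g0] by simp
    qed
    show "basis_elt ` basis_set \<subseteq> carrier VP3_grp" by (auto simp: basis_VP3)
  next
    fix w :: "(basis_idx \<times> bool) list"
    assume w: "w \<noteq> [] \<and> reduced w \<and> set (map fst w) \<subseteq> basis_set"
    then have wl: "fst ` set w \<subseteq> basis_set" by simp
    have "PhiV (word_eval VB3 basis_elt w) ([], K3) = (w, K3)"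
      using PhiV_basis_word[OF wl g0] w by (simp add: nf_def[symmetric] nf_reduced_id)
    then show "word_eval VP3_grp basis_elt w \<noteq> \<one>\<^bsub>VP3_grp\<^esub>"
      using word_eval_VP3[OF wl] PhiV_one[OF g0] w by auto
  qed
qed


end
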